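(* Suppose Assumptions 1, 2 and 3 hold and $\|\vec L\|_1>0$. Fix integers $K\ge1$, $M\ge1$ and an initial point $x_0$. Run distributed \textsc{signSGD} with majority vote for $K$ iterations: at step $k$, each worker $m\in\{1,\dots,M\}$ computes, independently of all other workers and previous steps, a mini-batch stochastic gradient $\tilde g_{m,k}$ of size $n_k$ at $x_k$, and $$x_{k+1}=x_k-\delta_k\,\mathrm{sign}\Big[\sum_{m=1}^M\mathrm{sign}(\tilde g_{m,k})\Big],\qquad \delta_k=\frac{1}{\sqrt{\|\vec L\|_1K}},\quad n_k=K.$$ Let $N=K^2$ be the number of oracle calls per worker, $g_k=\nabla f(x_k)$, $f_0=f(x_0)$. (a) Then $$\left(\mathbb{E}\Big[\frac1K\sum_{k=0}^{K-1}\|g_k\|_1\Big]\right)^2\le \frac{1}{\sqrt N}\left[\sqrt{\|\vec L\|_1}\Big(f_0-f_*+\frac12\Big)+2\|\vec\sigma\|_1\right]^2 .$$ (b) If in addition, for every $k$, $m$ and coordinate $i$, conditionally on $x_k$ the distribution of the noise $\tilde g_{m,k,i}-g_{k,i}$ is unimodal and symmetric about $0$, then $$\left(\mathbb{E}\Big[\frac1K\sum_{k=0}^{K-1}\|g_k\|_1\Big]\right)^2\le \frac{1}{\sqrt N}\left[\sqrt{\|\vec L\|_1}\Big(f_0-f_*+\frac12\Big)+\frac{2}{\sqrt M}\|\vec\sigma\|_1\right]^2 .$$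
   Context: $f:\mathbb{R}^d\to\mathbb{R}$ is differentiable with gradient $g(x)=\nabla f(x)$. Assumption 1: there is a constant $f_*$ with $f(x)\ge f_*$ for all $x$. Assumption 2: there is a vector $\vec L=(L_1,\dots,L_d)$ of non-negative constants such that for all $x,y$, $\big|f(y)-f(x)-g(x)^T(y-x)\big|\le \frac12\sum_{i=1}^d L_i(y_i-x_i)^2$. Assumption 3: upon query $x$, a stochastic gradient oracle returns a random vector $\tilde g(x)$, independent of all other oracle calls, with $\mathbb{E}[\tilde g(x)]=g(x)$ and $\mathbb{E}[(\tilde g(x)_i-g(x)_i)^2]\le\sigma_i^2$ for a vector $\vec\sigma=(\sigma_1,\dots,\sigma_d)$ of non-negative constants. A mini-batch stochastic gradient of size $n$ at $x$ is the average of $n$ independent oracle calls at $x$. $\mathrm{sign}$ acts componentwise, with $\mathrm{sign}(0)=0$. A real distribution is unimodal if its distribution function is convex on $(-\infty,\nu)$ and concave on $(\nu,\infty)$ for some mode $\nu$. *)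

theory Defs
  imports "HOL-Probability.Probability"
begin

text \<open>Componentwise sign, with sgn 0 = 0.\<close>
definition vsgn :: "real^'d \<Rightarrow> real^'d" where
  "vsgn v = (\<chi> i. sgn (v $ i))"

definition l1 :: "real^'d \<Rightarrow> real" where
  "l1 v = (\<Sum>i\<in>UNIV. \<bar>v $ i\<bar>)"

text \<open>Stochastic gradient oracle modelled as a sampling map: a call at x with
  fresh independent sample w (drawn from the sample law) returns G x w.\<close>
definition minibatch :: "(real^'d \<Rightarrow> 'w \<Rightarrow> real^'d) \<Rightarrow> nat \<Rightarrow> real^'d \<Rightarrow> (nat \<Rightarrow> 'w) \<Rightarrow> real^'d" where
  "minibatch G n x ws = (1 / real n) *\<^sub>R (\<Sum>j<n. G x (ws j))"

text \<open>Iterates of distributed signSGD with majority vote, given all samples: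
  ws (k, m, j) is the j-th sample used by worker m at step k.\<close>
primrec signsgd_mv ::
  "(real^'d \<Rightarrow> 'w \<Rightarrow> real^'d) \<Rightarrow> nat \<Rightarrow> (nat \<Rightarrow> real) \<Rightarrow> (nat \<Rightarrow> nat)
   \<Rightarrow> real^'d \<Rightarrow> (nat \<times> nat \<times> nat \<Rightarrow> 'w) \<Rightarrow> nat \<Rightarrow> real^'d" where
  "signsgd_mv G M delta n x0 ws 0 = x0"
| "signsgd_mv G M delta n x0 ws (Suc k) =
     (let x = signsgd_mv G M delta n x0 ws k in
      x - delta k *\<^sub>R vsgn (\<Sum>m<M. vsgn (minibatch G (n k) x (\<lambda>j. ws (k, m, j)))))"

definition unimodal :: "real measure \<Rightarrow> bool" where
  "unimodal \<mu> \<longleftrightarrow> (\<exists>\<nu>. convex_on {..<\<nu>} (\<lambda>t. measure \<mu> {..t})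
                        \<and> concave_on {\<nu><..} (\<lambda>t. measure \<mu> {..t}))"

definition symmetric0 :: "real measure \<Rightarrow> bool" where
  "symmetric0 \<mu> \<longleftrightarrow> distr \<mu> borel uminus = \<mu>"

definition minibatch_noise_law ::
  "(real^'d \<Rightarrow> 'w \<Rightarrow> real^'d) \<Rightarrow> 'w measure \<Rightarrow> (real^'d \<Rightarrow> real^'d) \<Rightarrow> nat \<Rightarrow> real^'d \<Rightarrow> 'd \<Rightarrow> real measure" where
  "minibatch_noise_law G P g n x i =
     distr (PiM {..<n} (\<lambda>_. P)) borel (\<lambda>ws. minibatch G n x ws $ i - g x $ i)"

end

theory Submission
  imports Defs
begin

lemma cantelli:
  assumes M: "prob_space M"
    and Yi: "integrable M Y" and Y2: "integrable M (\<lambda>w. (Y w)^2)"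
    and m0: "(\<integral>w. Y w \<partial>M) = 0" and v: "(\<integral>w. (Y w)^2 \<partial>M) \<le> V" and c: "0 < c"
  shows "measure M {w\<in>space M. c \<le> Y w} \<le> V / (V + c^2)"
proof -
  interpret prob_space M by fact
  have "0 \<le> (\<integral>w. (Y w)^2 \<partial>M)" by (intro integral_nonneg_AE) auto
  hence V0: "0 \<le> V" using v by linarith
  define u where "u = V / c"
  have u0: "0 \<le> u" using V0 c by (simp add: u_def)
  have eq: "(\<lambda>w. (Y w + u)^2) = (\<lambda>w. (Y w)^2 + (2*u) * Y w + u^2)"
    by (simp add: power2_sum algebra_simps)
  have int: "integrable M (\<lambda>w. (Y w + u)^2)"
    unfolding eq using Yi Y2 by auto
  have Ym: "Y \<in> borel_measurable M" using Yi by auto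
  have "measure M {w\<in>space M. c \<le> Y w} \<le> measure M {w\<in>space M. (c+u)^2 \<le> (Y w + u)^2}"
    using c u0 Ym by (intro finite_measure_mono) (auto intro!: power_mono)
  also have "\<dots> \<le> (\<integral>w. (Y w + u)^2 \<partial>M) / (c+u)^2"
    by (rule integral_Markov_inequality_measure[OF int, where A="space M"]) (use c u0 in auto)
  also have "(\<integral>w. (Y w + u)^2 \<partial>M) = (\<integral>w. (Y w)^2 \<partial>M) + u^2"
    unfolding eq using Yi Y2 m0 by (simp add: prob_space)
  also have "(\<dots>) / (c+u)^2 \<le> (V + u^2)/(c+u)^2"
    using v by (intro divide_right_mono) auto
  also have "\<dots> = V/(V+c^2)"
  proof -
    have pos: "0 < c^2 + V" using c V0 by (simp add: add_pos_nonneg)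
    have cu: "c + u = (c^2+V)/c" using c by (simp add: u_def field_simps power2_eq_square)
    have vu: "V + u^2 = V*(c^2+V)/c^2" using c by (simp add: u_def field_simps power2_eq_square)
    have gen: "\<And>w. 0 < w \<Longrightarrow> (V*w/c^2)/((w/c)^2) = V/w"
      using c by (simp add: power_divide field_simps power2_eq_square)
    show ?thesis unfolding cu vu using gen[OF pos] by (simp add: add.commute)
  qed
  finally show ?thesis .
qed

locale symu = prob_space mu for mu :: "real measure" +
  assumes sets_mu: "sets mu = sets borel"
    and uni: "unimodal mu" and sym: "symmetric0 mu"
begin

lemma sets_mu_borel[measurable_cong]: "sets mu = sets borel" by (rule sets_mu)

lemma space_mu: "space mu = UNIV" using sets_eq_imp_space_eq[OF sets_mu] by simp

lemma sym_ge: "prob {x..} = prob {..-x}"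
proof -
  have "prob {x..} = measure (distr mu borel uminus) {x..}" using sym by (simp add: symmetric0_def)
  also have "\<dots> = prob (uminus -` {x..} \<inter> space mu)" by (rule measure_distr) auto
  also have "uminus -` {x..} \<inter> space mu = {..-x}" by (auto simp: space_mu)
  finally show ?thesis .
qed

lemma half: assumes "0 < x" shows "2 * prob {..-x} \<le> 1"
proof -
  have "prob ({..-x} \<union> {x..}) = prob {..-x} + prob {x..}"
    using assms by (intro finite_measure_Union) auto
  moreover have "prob ({..-x} \<union> {x..}) \<le> 1" by (rule prob_le_1)
  ultimately show ?thesis using sym_ge[of x] by simp
qed

lemma atom0:
  assumes conc: "concave_on {nu<..} (\<lambda>t. prob {..t})" and x: "nu < x"
  shows "prob {x} = 0"
proof -
  let ?F = "\<lambda>t. prob {..t}"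
  have "continuous_on {nu<..} (\<lambda>t. - ?F t)"
    using conc unfolding concave_on_def by (intro convex_on_continuous) auto
  hence "continuous_on {nu<..} (\<lambda>t. - (- ?F t))" by (rule continuous_on_minus)
  hence "continuous_on {nu<..} ?F" by simp
  hence "isCont ?F x" using x by (simp add: continuous_on_eq_continuous_at)
  hence lim: "(?F \<longlongrightarrow> ?F x) (at_left x)"
    by (simp add: isCont_def filterlim_at_split)
  have ev: "\<forall>\<^sub>F t in at_left x. ?F t \<le> prob {..<x}"
    unfolding eventually_at_filter
    by (intro always_eventually allI impI finite_measure_mono) auto
  have le: "?F x \<le> prob {..<x}"
    by (rule tendsto_upperbound[OF lim ev trivial_limit_at_left_real])
  have "prob {x} = prob ({..x} - {..<x})" by (intro arg_cong[where f=prob]) auto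
  also have "\<dots> = ?F x - prob {..<x}" by (intro finite_measure_Diff) auto
  finally show ?thesis using le measure_nonneg[of mu "{x}"] by linarith
qed

lemma p_eq:
  assumes conc: "concave_on {nu<..} (\<lambda>t. prob {..t})" and x: "nu < x"
  shows "prob {..-x} = 1 - prob {..x}"
proof -
  have "prob {..-x} = prob {x..}" using sym_ge by simp
  also have "{x..} = space mu - {..<x}" by (auto simp: space_mu)
  also have "prob (space mu - {..<x}) = 1 - prob {..<x}" by (intro prob_compl) auto
  also have "prob {..<x} = prob {..x}"
  proof -
    have "prob {..x} = prob ({..<x} \<union> {x})" by (intro arg_cong[where f=prob]) auto
    also have "\<dots> = prob {..<x} + prob {x}" by (intro finite_measure_Union) auto
    finally show ?thesis using atom0[OF conc x] by simp
  qed
  finally show ?thesis .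
qed

lemma key_eps:
  assumes e: "0 < e" "e < a" and al: "a < l"
  shows "prob {..-a} * (l - e) \<le> (l - a) * prob {..-e} + (a - e) * prob {..-l}"
proof -
  let ?F = "\<lambda>t. prob {..t}"
  let ?p = "\<lambda>x. prob {..-x}"
  define th where "th = (a - e) / (l - e)"
  have th: "0 \<le> th" "th \<le> 1" using e al by (auto simp: th_def field_simps)
  have le: "l - e > 0" using e al by simp
  have the: "th * (l - e) = a - e" using le by (simp add: th_def)
  have comb: "(1 - th) * e + th * l = a"
  proof -
    have "(1 - th) * e + th * l = e + th * (l - e)" by (simp add: algebra_simps)
    thus ?thesis using the by simp
  qed
  have comb2: "(1 - th) * (l - e) = l - a" using the by (simp add: algebra_simps)
  have main: "?p a \<le> (1 - th) * ?p e + th * ?p l"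
  proof -
    obtain nu where cv: "convex_on {..<nu} ?F" and cc: "concave_on {nu<..} ?F"
      using uni unfolding unimodal_def by blast
    show ?thesis
    proof (cases "nu > 0")
      case True
      have "?F ((1 - th) *\<^sub>R (-e) + th *\<^sub>R (-l)) \<le> (1 - th) * ?F (-e) + th * ?F (-l)"
        by (rule convex_onD[OF cv th]) (use True e al in auto)
      moreover have "(1 - th) *\<^sub>R (-e) + th *\<^sub>R (-l) = - a" using comb by simp
      ultimately show ?thesis by simp
    next
      case False
      have cv2: "convex_on {nu<..} (\<lambda>t. - ?F t)" using cc by (simp add: concave_on_def)
      have "- ?F ((1 - th) *\<^sub>R e + th *\<^sub>R l) \<le> (1 - th) * (- ?F e) + th * (- ?F l)"
        by (rule convex_onD[OF cv2 th]) (use False e al in auto)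
      moreover have "(1 - th) *\<^sub>R e + th *\<^sub>R l = a" using comb by simp
      ultimately have "(1 - th) * ?F e + th * ?F l \<le> ?F a" by simp
      moreover have "?p a = 1 - ?F a" "?p e = 1 - ?F e" "?p l = 1 - ?F l"
        using p_eq[OF cc] False e al by auto
      ultimately show ?thesis by (simp only:) (simp add: algebra_simps)
    qed
  qed
  have "?p a * (l - e) \<le> ((1 - th) * ?p e + th * ?p l) * (l - e)"
    using main le by (intro mult_right_mono) auto
  also have "\<dots> = ((1 - th) * (l - e)) * ?p e + (th * (l - e)) * ?p l" by (simp add: algebra_simps)
  finally show ?thesis using comb2 the by simp
qed

lemma tail_step:
  assumes a: "0 < a" "a \<le> l"
  shows "a * (1 - 2 * prob {..-l}) \<le> l * (1 - 2 * prob {..-a})"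
proof (cases "a = l")
  case True thus ?thesis by simp
next
  case False
  hence al: "a < l" using a by simp
  define D where "D = l * (1 - 2 * prob {..-a}) - a * (1 - 2 * prob {..-l})"
  have ra: "0 \<le> 1 - 2 * prob {..-a}" using half[OF a(1)] by simp
  have rl: "1 - 2 * prob {..-l} \<le> 1" using measure_nonneg[of mu "{..-l}"] by simp
  have bound: "- e \<le> D" if e: "0 < e" "e < a" for e
  proof -
    have "prob {..-a} * (l - e) \<le> (l - a) * prob {..-e} + (a - e) * prob {..-l}"
      by (rule key_eps[OF e al])
    moreover have "2 * prob {..-e} \<le> 1" by (rule half[OF e(1)])
    moreover have "(l - a) * (2 * prob {..-e}) \<le> (l - a) * 1"
      using al \<open>2 * prob {..-e} \<le> 1\<close> by (intro mult_left_mono) auto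
    ultimately have "2 * prob {..-a} * (l - e) \<le> (l - a) + 2 * (a - e) * prob {..-l}"
      by (simp add: algebra_simps)
    hence "(a - e) * (1 - 2 * prob {..-l}) \<le> (l - e) * (1 - 2 * prob {..-a})"
      by (simp add: algebra_simps)
    hence "D \<ge> e * ((1 - 2 * prob {..-a}) - (1 - 2 * prob {..-l}))"
      unfolding D_def by (simp add: algebra_simps)
    moreover have "e * ((1 - 2 * prob {..-a}) - (1 - 2 * prob {..-l})) \<ge> e * (-1)"
    proof -
      have dif: "-1 \<le> (1 - 2 * prob {..-a}) - (1 - 2 * prob {..-l})" using ra rl by linarith
      show ?thesis by (rule mult_left_mono[OF dif]) (use e in simp)
    qed
    ultimately show ?thesis by simp
  qed
  have "0 \<le> D"
  proof (rule ccontr)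
    assume "\<not> 0 \<le> D"
    define e where "e = min (a/2) (-D/2)"
    have "0 < e" "e < a" using \<open>\<not> 0 \<le> D\<close> a by (auto simp: e_def)
    from bound[OF this] show False using \<open>\<not> 0 \<le> D\<close> by (simp add: e_def)
  qed
  thus ?thesis by (simp add: D_def)
qed

end

lemma poly_has_integral:
  fixes u v al be :: real
  assumes "u \<le> v"
  shows "((\<lambda>t. 2*al*t + be*t^2) has_integral (al*(v^2 - u^2) + be*(v^3 - u^3)/3)) {u..v}"
proof -
  have "((\<lambda>t. 2*al*t + be*t^2) has_integral ((al * v^2 + be * v^3 / 3) - (al * u^2 + be * u^3 / 3))) {u..v}"
  proof (rule fundamental_theorem_of_calculus[OF assms])
    fix x :: real assume "x \<in> {u..v}"
    have "((\<lambda>t. al*t^2 + be*t^3/3) has_real_derivative (2*al*x + be*x^2)) (at x within {u..v})"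
      by (auto intro!: derivative_eq_intros simp: power2_eq_square)
    thus "((\<lambda>t. al*t^2 + be*t^3/3) has_vector_derivative (2*al*x + be*x^2)) (at x within {u..v})"
      by (simp add: has_real_derivative_iff_has_vector_derivative)
  qed
  thus ?thesis by (simp add: algebra_simps diff_divide_distrib)
qed

lemma sq_layer:
  fixes z :: real
  shows "ennreal (z^2) = (\<integral>\<^sup>+ t. ennreal (indicator {0..\<bar>z\<bar>} t * (2*t)) \<partial>lborel)"
proof -
  have "((\<lambda>t. 2*1*t + 0*t^2) has_integral (1*(\<bar>z\<bar>^2 - 0^2) + 0*(\<bar>z\<bar>^3 - 0^3)/3)) {0..\<bar>z\<bar>}"
    by (rule poly_has_integral) simp
  hence "((\<lambda>t. 2*t) has_integral z^2) {0..\<bar>z\<bar>}" by simp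
  from nn_integral_has_integral_lebesgue[OF _ this] show ?thesis by simp
qed

context symu
begin

lemma D_eq: assumes "0 < t" shows "prob {z. t \<le> \<bar>z\<bar>} = 2 * prob {..-t}"
proof -
  have "{z. t \<le> \<bar>z\<bar>} = {..-t} \<union> {t..}" using assms by auto
  hence "prob {z. t \<le> \<bar>z\<bar>} = prob {..-t} + prob {t..}"
    using assms by (simp, intro finite_measure_Union) auto
  thus ?thesis using sym_ge[of t] by simp
qed

lemma D_bound1:
  assumes "0 \<le> t" "t \<le> a" "0 < a"
  shows "1 - (1 - 2 * prob {..-a}) \<le> prob {z. t \<le> \<bar>z\<bar>}"
proof -
  have "prob {z. a \<le> \<bar>z\<bar>} \<le> prob {z. t \<le> \<bar>z\<bar>}"
    using assms by (intro finite_measure_mono) auto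
  thus ?thesis using D_eq[OF assms(3)] by simp
qed

lemma D_bound2:
  assumes "0 < a" "a < t"
  shows "1 - t * (1 - 2 * prob {..-a}) / a \<le> prob {z. t \<le> \<bar>z\<bar>}"
proof -
  have "a * (1 - 2 * prob {..-t}) \<le> t * (1 - 2 * prob {..-a})"
    using assms by (intro tail_step) auto
  hence "1 - 2 * prob {..-t} \<le> t * (1 - 2 * prob {..-a}) / a"
    using assms by (simp add: field_simps)
  thus ?thesis using D_eq[of t] assms by simp
qed

lemma layer_lb:
  assumes a: "0 < a" and c: "a \<le> c" and cr: "c * (1 - 2 * prob {..-a}) \<le> a"
  shows "ennreal (a^2 * (1 - (1 - 2 * prob {..-a})) + ((c^2 - a^2) - 2 * (1 - 2 * prob {..-a}) * (c^3 - a^3) / (3*a)))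
           \<le> (\<integral>\<^sup>+ z. ennreal (z^2) \<partial>mu)"
proof -
  define r where "r = 1 - 2 * prob {..-a}"
  have r0: "0 \<le> r" using half[OF a] by (simp add: r_def)
  define m where "m = (\<lambda>t::real. indicator {0..a} t * (2*(1-r)*t + 0*t^2)
                       + indicator {a<..c} t * (2*1*t + (-2*r/a)*t^2))"
  have A: "(\<integral>\<^sup>+ t. ennreal (indicator {0..a} t * (2*(1-r)*t + 0*t^2)) \<partial>lborel)
            = ennreal ((1-r)*(a^2 - 0^2) + 0*(a^3-0^3)/3)"
    using a r0 by (intro nn_integral_has_integral_lebesgue poly_has_integral)
       (auto simp: r_def intro!: mult_nonneg_nonneg)
  have Bc: "(\<integral>\<^sup>+ t. ennreal (indicator {a..c} t * (2*1*t + (-2*r/a)*t^2)) \<partial>lborel)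
            = ennreal (1*(c^2 - a^2) + (-2*r/a)*(c^3-a^3)/3)"
  proof (intro nn_integral_has_integral_lebesgue poly_has_integral c)
    fix t assume t: "t \<in> {a..c}"
    have "t * r \<le> c * r" using t r0 by (intro mult_right_mono) auto
    hence "t * r / a \<le> 1" using cr a by (simp add: r_def)
    hence "0 \<le> 1 - t * r / a" by simp
    hence "0 \<le> 2 * t * (1 - t * r / a)" using t a by simp
    thus "0 \<le> 2 * 1 * t + - 2 * r / a * t\<^sup>2" by (simp add: algebra_simps power2_eq_square)
  qed
  have B: "(\<integral>\<^sup>+ t. ennreal (indicator {a<..c} t * (2*1*t + (-2*r/a)*t^2)) \<partial>lborel)
         = (\<integral>\<^sup>+ t. ennreal (indicator {a..c} t * (2*1*t + (-2*r/a)*t^2)) \<partial>lborel)"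
    by (intro nn_integral_cong_AE, rule AE_mp[OF AE_lborel_singleton[of a]]) (auto split: split_indicator)
  have B2: "0 \<le> 1*(c^2 - a^2) + (-2*r/a)*(c^3-a^3)/3"
  proof (rule has_integral_nonneg[OF poly_has_integral[OF c]])
    fix t assume t: "t \<in> {a..c}"
    have "t * r \<le> c * r" using t r0 by (intro mult_right_mono) auto
    hence "t * r / a \<le> 1" using cr a by (simp add: r_def)
    hence "0 \<le> 1 - t * r / a" by simp
    hence "0 \<le> 2 * t * (1 - t * r / a)" using t a by simp
    thus "0 \<le> 2 * 1 * t + - 2 * r / a * t\<^sup>2" by (simp add: algebra_simps power2_eq_square)
  qed
  have A2: "0 \<le> (1-r)*(a^2 - 0^2) + 0*(a^3-0^3)/3"
    using r0 half[OF a] by (simp add: r_def)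
  let ?h = "\<lambda>z t. ennreal (indicator {0..\<bar>z\<bar>} t * (2*t))"
  have hmeas: "(\<lambda>(z,t). ?h z t) \<in> borel_measurable (mu \<Otimes>\<^sub>M lborel)"
  proof -
    have eq: "(\<lambda>(z,t). ?h z t) = (\<lambda>(z,t). ennreal (if 0 \<le> t \<and> t \<le> \<bar>z\<bar> then 2*t else 0))"
      by (auto simp: fun_eq_iff split: split_indicator)
    show ?thesis unfolding eq by measurable
  qed
  interpret pair_sigma_finite mu lborel
    by (intro pair_sigma_finite.intro) (simp_all add: prob_space_imp_sigma_finite prob_space_axioms lborel.sigma_finite_measure_axioms)
  have pw: "ennreal (indicator {0..a} t * (2*(1-r)*t + 0*t^2)) + ennreal (indicator {a<..c} t * (2*1*t + (-2*r/a)*t^2))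
        \<le> (\<integral>\<^sup>+ z. ?h z t \<partial>mu)" for t
  proof (cases "0 \<le> t")
    case False thus ?thesis using a by (auto split: split_indicator)
  next
    case True
    have "(\<integral>\<^sup>+ z. ?h z t \<partial>mu) = (\<integral>\<^sup>+ z. ennreal (2*t) * indicator {z. t \<le> \<bar>z\<bar>} z \<partial>mu)"
      using True by (intro nn_integral_cong) (auto split: split_indicator)
    also have "\<dots> = ennreal (2*t) * emeasure mu {z. t \<le> \<bar>z\<bar>}"
      by (rule nn_integral_cmult_indicator) auto
    also have "\<dots> = ennreal (2*t * prob {z. t \<le> \<bar>z\<bar>})"
      using True by (simp add: emeasure_eq_measure ennreal_mult)
    finally have eq: "(\<integral>\<^sup>+ z. ?h z t \<partial>mu) = ennreal (2*t * prob {z. t \<le> \<bar>z\<bar>})" .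
    show ?thesis
    proof (cases "t \<le> a")
      case True2: True
      have "1 - r \<le> prob {z. t \<le> \<bar>z\<bar>}" using D_bound1[OF True True2 a] by (simp add: r_def)
      hence "2*t*(1-r) \<le> 2*t * prob {z. t \<le> \<bar>z\<bar>}" using True by (intro mult_left_mono) auto
      hence "2*(1-r)*t \<le> 2*t * prob {z. t \<le> \<bar>z\<bar>}" by (simp add: algebra_simps)
      thus ?thesis unfolding eq using True True2 by (auto split: split_indicator)
    next
      case False2: False
      show ?thesis
      proof (cases "t \<le> c")
        case True3: True
        have "1 - t * r / a \<le> prob {z. t \<le> \<bar>z\<bar>}" using D_bound2[of a t] a False2 by (simp add: r_def)
        hence "2*t*(1 - t * r / a) \<le> 2*t * prob {z. t \<le> \<bar>z\<bar>}" using True by (intro mult_left_mono) auto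
        moreover have "2*1*t + (-2*r/a)*t^2 = 2*t*(1 - t * r / a)" by (simp add: algebra_simps power2_eq_square)
        ultimately show ?thesis unfolding eq using True False2 True3 by (auto split: split_indicator)
      next
        case False3: False
        thus ?thesis using False2 by (auto split: split_indicator)
      qed
    qed
  qed
  have "ennreal (a^2 * (1 - r) + ((c^2 - a^2) - 2 * r * (c^3 - a^3) / (3*a)))
        = ennreal ((1-r)*(a^2 - 0^2) + 0*(a^3-0^3)/3) + ennreal (1*(c^2 - a^2) + (-2*r/a)*(c^3-a^3)/3)"
  proof -
    have "a^2 * (1 - r) + ((c^2 - a^2) - 2 * r * (c^3 - a^3) / (3*a))
       = ((1-r)*(a^2 - 0^2) + 0*(a^3-0^3)/3) + (1*(c^2 - a^2) + (-2*r/a)*(c^3-a^3)/3)"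
      using a by (simp add: field_simps)
    thus ?thesis by (simp only: ennreal_plus[OF A2 B2])
  qed
  also have "\<dots> = (\<integral>\<^sup>+ t. ennreal (indicator {0..a} t * (2*(1-r)*t + 0*t^2)) + ennreal (indicator {a<..c} t * (2*1*t + (-2*r/a)*t^2)) \<partial>lborel)"
  proof -
    have "(\<integral>\<^sup>+ t. ennreal (indicator {0..a} t * (2*(1-r)*t + 0*t^2)) + ennreal (indicator {a<..c} t * (2*1*t + (-2*r/a)*t^2)) \<partial>lborel)
       = (\<integral>\<^sup>+ t. ennreal (indicator {0..a} t * (2*(1-r)*t + 0*t^2)) \<partial>lborel) + (\<integral>\<^sup>+ t. ennreal (indicator {a<..c} t * (2*1*t + (-2*r/a)*t^2)) \<partial>lborel)"
      by (rule nn_integral_add) auto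
    thus ?thesis by (simp only: A B Bc)
  qed
  also have "\<dots> \<le> (\<integral>\<^sup>+ t. (\<integral>\<^sup>+ z. ?h z t \<partial>mu) \<partial>lborel)"
    by (intro nn_integral_mono pw)
  also have "\<dots> = (\<integral>\<^sup>+ z. (\<integral>\<^sup>+ t. ?h z t \<partial>lborel) \<partial>mu)"
    by (rule Fubini'[OF hmeas])
  also have "\<dots> = (\<integral>\<^sup>+ z. ennreal (z^2) \<partial>mu)"
    by (intro nn_integral_cong) (simp add: sq_layer)
  finally show ?thesis by (simp add: r_def)
qed


lemma gauss:
  assumes a: "0 < a" and int: "integrable mu (\<lambda>z. z^2)" and T: "(\<integral>z. z^2 \<partial>mu) \<le> T"
  shows "a^2 * (1 - (1 - 2 * prob {..-a})^2) \<le> 4 * T * (1 - 2 * prob {..-a})^2"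
proof -
  define r where "r = 1 - 2 * prob {..-a}"
  define S where "S = (\<integral>z. z^2 \<partial>mu)"
  have r0: "0 \<le> r" using half[OF a] by (simp add: r_def)
  have r1: "r \<le> 1" by (simp add: r_def)
  have S0: "0 \<le> S" unfolding S_def by (intro integral_nonneg_AE) auto
  have Seq: "(\<integral>\<^sup>+ z. ennreal (z^2) \<partial>mu) = ennreal S"
    unfolding S_def by (rule nn_integral_eq_integral[OF int]) auto
  have lb: "a^2 * (1 - r) + ((c^2 - a^2) - 2 * r * (c^3 - a^3) / (3*a)) \<le> S"
    if c: "a \<le> c" "c * r \<le> a" for c
  proof -
    have "ennreal (a^2 * (1 - r) + ((c^2 - a^2) - 2 * r * (c^3 - a^3) / (3*a))) \<le> ennreal S"
      using layer_lb[OF a c(1)] c(2) Seq by (simp add: r_def)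
    thus ?thesis using S0 by (simp add: ennreal_le_iff)
  qed
  have rpos: "0 < r"
  proof (rule ccontr)
    assume "\<not> 0 < r"
    hence r00: "r = 0" using r0 by simp
    define c where "c = max a (sqrt S + 1)"
    have "a \<le> c" "c * r \<le> a" using a r00 by (auto simp: c_def)
    from lb[OF this] have "c^2 \<le> S" using r00 by simp
    moreover have "sqrt S + 1 \<le> c" by (simp add: c_def)
    hence "(sqrt S + 1)^2 \<le> c^2" using S0 by (intro power_mono) auto
    moreover have "(sqrt S + 1)^2 > S"
    proof -
      have "0 \<le> sqrt S" using S0 by simp
      thus ?thesis using S0 by (simp add: power2_sum add_pos_nonneg)
    qed
    ultimately show False by simp
  qed
  define c where "c = a / r"
  have c1: "a \<le> c" using a rpos r1 by (simp add: c_def field_simps)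
  have c2: "c * r \<le> a" using rpos by (simp add: c_def)
  have L: "a^2 * (1 - r) + ((c^2 - a^2) - 2 * r * (c^3 - a^3) / (3*a)) \<le> S" by (rule lb[OF c1 c2])
  have Lr: "(a^2 * (1 - r) + ((c^2 - a^2) - 2 * r * (c^3 - a^3) / (3*a))) * r^2 = a^2 * (1 - r^3) / 3"
    using a rpos by (simp add: c_def field_simps power2_eq_square power3_eq_cube)
  have "a^2 * (1 - r^3) / 3 \<le> S * r^2"
    using mult_right_mono[OF L, of "r^2"] Lr by simp
  also have "S * r^2 \<le> T * r^2" using T by (intro mult_right_mono) (auto simp: S_def)
  finally have "4 * (a^2 * (1 - r^3) / 3) \<le> 4 * T * r^2" by simp
  moreover have "a^2 * (1 - r^2) \<le> 4 * (a^2 * (1 - r^3) / 3)"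
  proof -
    have "0 \<le> (1 - r) * (4*r^2 + r + 1)" using r0 r1 by (intro mult_nonneg_nonneg) auto
    hence "0 \<le> a^2 * ((1 - r) * (4*r^2 + r + 1))" by simp
    thus ?thesis by (simp add: algebra_simps power2_eq_square power3_eq_cube)
  qed
  ultimately show ?thesis by (simp add: r_def)
qed

end

locale smooth =
  fixes f :: "real^'d \<Rightarrow> real" and g :: "real^'d \<Rightarrow> real^'d" and L :: "real^'d"
  assumes grad: "\<And>x. (f has_derivative (\<lambda>h. g x \<bullet> h)) (at x)"
    and L_nonneg: "\<And>i. L $ i \<ge> 0"
    and A2: "\<And>x y. \<bar>f y - f x - g x \<bullet> (y - x)\<bar> \<le> (1/2) * (\<Sum>i\<in>UNIV. L $ i * (y $ i - x $ i)^2)"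
begin

lemma f_cont: "continuous_on UNIV f"
  using grad by (intro continuous_at_imp_continuous_on ballI has_derivative_continuous) blast

definition q :: "real^'d \<Rightarrow> real" where "q w = (\<Sum>j\<in>UNIV. L $ j * (w $ j)^2)"

lemma q_nonneg: "0 \<le> q w" unfolding q_def using L_nonneg by (intro sum_nonneg mult_nonneg_nonneg) auto

lemma l1L: "l1 L = (\<Sum>j\<in>UNIV. L $ j)" unfolding l1_def using L_nonneg by simp

lemma q_le: "q w \<le> l1 L * (norm w)^2"
proof -
  have "q w \<le> (\<Sum>j\<in>UNIV. L $ j * (norm w)^2)" unfolding q_def
  proof (intro sum_mono mult_left_mono L_nonneg)
    fix j
    have "\<bar>w $ j\<bar>^2 \<le> (norm w)^2" using component_le_norm_cart[of w j] by (intro power_mono) auto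
    thus "(w $ j)^2 \<le> (norm w)^2" by simp
  qed
  also have "\<dots> = l1 L * (norm w)^2" by (simp add: l1L sum_distrib_right)
  finally show ?thesis .
qed

lemma q_add: "q (u + w) \<le> 2 * q u + 2 * q w"
proof -
  have "q (u + w) \<le> (\<Sum>j\<in>UNIV. L $ j * (2*(u $ j)^2 + 2*(w $ j)^2))" unfolding q_def
  proof (intro sum_mono mult_left_mono L_nonneg)
    fix j
    have "0 \<le> (u$j - w$j)^2" by simp
    thus "((u + w) $ j)^2 \<le> 2*(u $ j)^2 + 2*(w $ j)^2" by (simp add: power2_eq_square algebra_simps)
  qed
  also have "\<dots> = 2 * q u + 2 * q w" by (simp add: q_def sum_distrib_left algebra_simps sum.distrib)
  finally show ?thesis .
qed

lemma A2q: "\<bar>f y - f x - g x \<bullet> (y - x)\<bar> \<le> (1/2) * q (y - x)"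
  using A2[of y x] by (simp add: q_def)

lemma q_axis: "q (axis i s) = L $ i * s^2"
proof -
  have "q (axis i s) = (\<Sum>j\<in>UNIV. if j = i then L $ i * s^2 else 0)"
    unfolding q_def by (intro sum.cong) (auto simp: axis_def)
  thus ?thesis by simp
qed

lemma l1_nonneg: "0 \<le> l1 v" unfolding l1_def by (intro sum_nonneg) auto

lemma g_comp_lip: "\<bar>g x $ i - g y $ i\<bar> \<le> (3/2) * (L $ i + l1 L) * norm (y - x)"
proof (cases "y = x")
  case True thus ?thesis by simp
next
  case False
  define d where "d = y - x"
  define s where "s = norm d"
  have s: "0 < s" using False by (simp add: s_def d_def)
  define h where "h = axis i s"
  define E where "E = (\<lambda>u v. f v - f u - g u \<bullet> (v - u))"
  have id: "(g x - g y) \<bullet> h = E y (y + h) - E x (y + h) + E x y"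
    by (simp add: E_def inner_diff_left inner_diff_right inner_add_right algebra_simps)
  have lhs: "(g x - g y) \<bullet> h = s * (g x $ i - g y $ i)"
    by (simp add: h_def inner_axis mult.commute)
  have "\<bar>E y (y + h) - E x (y + h) + E x y\<bar> \<le> \<bar>E y (y + h)\<bar> + \<bar>E x (y + h)\<bar> + \<bar>E x y\<bar>" by linarith
  also have "\<dots> \<le> (1/2) * q h + (1/2) * q (d + h) + (1/2) * q d"
    using A2q[of "y+h" y] A2q[of "y+h" x] A2q[of y x] by (simp add: E_def d_def algebra_simps)
  also have "\<dots> \<le> (1/2) * q h + (1/2) * (2 * q d + 2 * q h) + (1/2) * q d"
    using q_add[of d h] by simp
  also have "\<dots> = (3/2) * (L $ i * s^2 + q d)" by (simp add: h_def q_axis algebra_simps)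
  also have "\<dots> \<le> (3/2) * (L $ i * s^2 + l1 L * s^2)" using q_le[of d] by (simp add: s_def)
  finally have bnd: "\<bar>E y (y + h) - E x (y + h) + E x y\<bar> \<le> (3/2) * (L $ i * s^2 + l1 L * s^2)" .
  have "s * \<bar>g x $ i - g y $ i\<bar> = \<bar>s * (g x $ i - g y $ i)\<bar>"
    using s by (simp add: abs_mult)
  also have "s * (g x $ i - g y $ i) = E y (y + h) - E x (y + h) + E x y"
    using id lhs by simp
  finally have eqs: "s * \<bar>g x $ i - g y $ i\<bar> = \<bar>E y (y + h) - E x (y + h) + E x y\<bar>" .
  have e2: "(3/2) * (L $ i * s^2 + l1 L * s^2) = (3/2) * (L $ i + l1 L) * s * s"
    by (simp add: power2_eq_square algebra_simps)
  have "s * \<bar>g x $ i - g y $ i\<bar> \<le> (3/2) * (L $ i + l1 L) * s * s" using bnd eqs e2 by linarith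
  hence "\<bar>g x $ i - g y $ i\<bar> \<le> (3/2) * (L $ i + l1 L) * s" using s
    by (metis mult.commute mult_le_cancel_left_pos mult.assoc)
  thus ?thesis by (simp add: s_def d_def)
qed

lemma g_lip: "dist (g x) (g y) \<le> (3/2) * (l1 L + real CARD('d) * l1 L) * dist x y"
proof -
  have "dist (g x) (g y) \<le> (\<Sum>i\<in>UNIV. \<bar>(g x - g y) $ i\<bar>)" unfolding dist_norm by (rule norm_le_l1_cart)
  also have "\<dots> \<le> (\<Sum>i\<in>UNIV. (3/2) * (L $ i + l1 L) * norm (y - x))"
  proof (rule sum_mono)
    fix i show "\<bar>(g x - g y) $ i\<bar> \<le> (3/2) * (L $ i + l1 L) * norm (y - x)"
      using g_comp_lip[of x i y] by simp
  qed
  also have "\<dots> = (\<Sum>i\<in>UNIV. ((3/2)*norm(y-x))*L$i + (3/2)*norm(y-x)*l1 L)"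
    by (intro sum.cong) (auto simp: algebra_simps)
  also have "\<dots> = ((3/2)*norm(y-x))*(\<Sum>i\<in>UNIV. L$i) + real CARD('d) * ((3/2)*norm(y-x)*l1 L)"
  proof -
    have gen: "\<And>c k. (\<Sum>i\<in>(UNIV::'d set). c * L$i + k) = c * (\<Sum>i\<in>UNIV. L$i) + real CARD('d) * k"
      by (simp add: sum.distrib sum_distrib_left)
    show ?thesis by (rule gen)
  qed
  also have "\<dots> = (3/2) * (l1 L + real CARD('d) * l1 L) * dist x y"
    by (simp add: l1L[symmetric] dist_norm norm_minus_commute algebra_simps)
  finally show ?thesis .
qed

lemma g_cont: "continuous_on UNIV g"
proof (rule lipschitz_on_continuous_on)
  show "((3/2) * (l1 L + real CARD('d) * l1 L))-lipschitz_on UNIV g"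
    using g_lip l1_nonneg[of L] by (intro lipschitz_onI) auto
qed

lemma descent:
  assumes v: "\<And>i. \<bar>v $ i\<bar> \<le> 1" and dl: "0 \<le> dl"
  shows "f (x - dl *\<^sub>R v) \<le> f x - dl * (g x \<bullet> v) + dl^2 / 2 * l1 L"
proof -
  let ?y = "x - dl *\<^sub>R v"
  have "f ?y - f x - g x \<bullet> (?y - x) \<le> (1/2) * q (?y - x)" using A2q[of ?y x] by linarith
  moreover have "q (?y - x) \<le> dl^2 * l1 L"
  proof -
    have "q (?y - x) = (\<Sum>j\<in>UNIV. L $ j * (dl^2 * (v $ j)^2))"
      by (simp add: q_def power_mult_distrib)
    also have "\<dots> \<le> (\<Sum>j\<in>UNIV. L $ j * (dl^2 * 1))"
    proof (rule sum_mono, rule mult_left_mono)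
      fix j
      have "\<bar>v $ j\<bar>^2 \<le> 1^2" using v[of j] by (intro power_mono) auto
      hence "(v $ j)^2 \<le> 1" by simp
      thus "dl^2 * (v $ j)^2 \<le> dl^2 * 1" by (intro mult_left_mono) auto
      show "0 \<le> L $ j" by (rule L_nonneg)
    qed
    also have "\<dots> = dl^2 * l1 L" by (simp add: l1L sum_distrib_right[symmetric] mult.commute)
    finally show ?thesis .
  qed
  moreover have "g x \<bullet> (?y - x) = - dl * (g x \<bullet> v)" by (simp add: inner_diff_right)
  ultimately show ?thesis by (simp add: algebra_simps)
qed

end

lemma borel_measurable_vec_lambda:
  fixes h :: "'i::finite \<Rightarrow> 'a \<Rightarrow> real"
  assumes "\<And>i. h i \<in> borel_measurable N"
  shows "(\<lambda>z. (\<chi> i. h i z) :: real^'i) \<in> borel_measurable N"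
proof (subst borel_measurable_euclidean_space, intro ballI)
  fix b :: "real^'i" assume "b \<in> Basis"
  then obtain i where b: "b = axis i 1" by (auto simp: Basis_vec_def)
  show "(\<lambda>z. (\<chi> i. h i z) \<bullet> b) \<in> borel_measurable N"
    unfolding b inner_axis using assms[of i] by simp
qed

lemma vsgn_nth[simp]: "vsgn v $ i = sgn (v $ i)" by (simp add: vsgn_def)

lemma vsgn_abs_le: "\<bar>vsgn v $ i\<bar> \<le> 1" by (simp add: abs_sgn_eq)

lemma norm_vsgn_le: "norm (vsgn (v :: real^'d)) \<le> real CARD('d)"
proof -
  have "norm (vsgn v) \<le> (\<Sum>i\<in>UNIV. \<bar>vsgn v $ i\<bar>)" by (rule norm_le_l1_cart)
  also have "\<dots> \<le> (\<Sum>i\<in>(UNIV::'d set). 1)" by (intro sum_mono vsgn_abs_le)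
  finally show ?thesis by simp
qed

lemma meas_vsgn:
  assumes "h \<in> borel_measurable N"
  shows "(\<lambda>z. vsgn (h z :: real^'d)) \<in> borel_measurable N"
proof -
  have "(\<lambda>z. sgn (h z $ i)) \<in> borel_measurable N" for i
    using measurable_compose[OF measurable_compose[OF assms borel_measurable_nth] borel_measurable_sgn] by simp
  thus ?thesis unfolding vsgn_def by (intro borel_measurable_vec_lambda)
qed

lemma meas_minibatch:
  assumes G: "(\<lambda>(x, w). G x w) \<in> borel_measurable (borel \<Otimes>\<^sub>M P)"
    and xi: "xi \<in> borel_measurable N"
    and ws: "\<And>j. j < n \<Longrightarrow> (\<lambda>z. ws z j) \<in> N \<rightarrow>\<^sub>M P"
  shows "(\<lambda>z. minibatch G n (xi z) (ws z) :: real^'d) \<in> borel_measurable N"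
proof -
  have "(\<lambda>z. G (xi z) (ws z j)) \<in> borel_measurable N" if "j < n" for j
    by (rule measurable_Pair_compose_split[OF G xi ws[OF that]])
  thus ?thesis unfolding minibatch_def
    by (intro borel_measurable_scaleR borel_measurable_const borel_measurable_sum) auto
qed

lemma minibatch_cong:
  "(\<And>j. j < n \<Longrightarrow> ws j = ws' j) \<Longrightarrow> minibatch G n x ws = minibatch G n x ws'"
  unfolding minibatch_def by (intro arg_cong[where f="\<lambda>s. _ *\<^sub>R s"] sum.cong) auto

lemma majority_pw:
  fixes gm :: real and y :: "nat \<Rightarrow> real" and M :: nat
  defines "nb \<equiv> (\<Sum>m<M. if gm * y m \<le> 0 then 1 else 0 :: real)"
  shows "\<bar>gm\<bar> - 2 * \<bar>gm\<bar> * (if 2 * nb \<ge> real M then 1 else 0) \<le> gm * sgn (\<Sum>m<M. sgn (y m))"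
proof (cases "gm = 0")
  case True thus ?thesis by simp
next
  case False
  let ?S = "\<Sum>m<M. sgn (y m)"
  have low: "real M - 2 * nb \<le> sgn gm * ?S"
  proof -
    have "real M - 2 * nb = (\<Sum>m<M. 1 - 2 * (if gm * y m \<le> 0 then 1 else 0 :: real))"
      by (simp add: nb_def sum_subtractf sum_distrib_left)
    also have "\<dots> \<le> (\<Sum>m<M. sgn gm * sgn (y m))"
    proof (rule sum_mono)
      fix m
      show "1 - 2 * (if gm * y m \<le> 0 then 1 else 0 :: real) \<le> sgn gm * sgn (y m)"
      proof (cases "gm * y m \<le> 0")
        case True
        have "\<bar>sgn gm * sgn (y m)\<bar> \<le> 1" by (simp add: abs_mult abs_sgn_eq)
        thus ?thesis using True by auto
      next
        case False
        hence "sgn gm * sgn (y m) = 1" by (simp add: sgn_mult[symmetric])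
        thus ?thesis using False by simp
      qed
    qed
    also have "\<dots> = sgn gm * ?S" by (simp add: sum_distrib_left)
    finally show ?thesis .
  qed
  show ?thesis
  proof (cases "2 * nb \<ge> real M")
    case True
    have "\<bar>gm * sgn ?S\<bar> \<le> \<bar>gm\<bar>" by (simp add: abs_mult abs_sgn_eq)
    thus ?thesis using True by auto
  next
    case F: False
    hence pos: "0 < sgn gm * ?S" using low by linarith
    have "sgn ?S = sgn gm"
      using pos False by (cases "gm > 0"; cases "?S > 0"; cases "?S = 0") (auto simp: sgn_if split: if_splits)
    hence "gm * sgn ?S = \<bar>gm\<bar>" by (simp add: abs_sgn)
    thus ?thesis using F by simp
  qed
qed

lemma freeze:
  fixes X Y :: "'a \<Rightarrow> 'b" and F :: "'b \<Rightarrow> 'b \<Rightarrow> real"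
  assumes Qp: "prob_space Q" and ind: "prob_space.indep_var Q N1 X N2 Y"
    and F: "(\<lambda>(x,y). F x y) \<in> borel_measurable (N1 \<Otimes>\<^sub>M N2)" and bnd: "\<And>x y. \<bar>F x y\<bar> \<le> C"
  shows "(\<integral>\<omega>. F (X \<omega>) (Y \<omega>) \<partial>Q) = (\<integral>\<omega>. (\<integral>\<omega>'. F (X \<omega>) (Y \<omega>') \<partial>Q) \<partial>Q)"
proof -
  interpret Q: prob_space Q by fact
  have rvX: "X \<in> Q \<rightarrow>\<^sub>M N1" and rvY: "Y \<in> Q \<rightarrow>\<^sub>M N2"
    and eqd: "distr Q N1 X \<Otimes>\<^sub>M distr Q N2 Y = distr Q (N1 \<Otimes>\<^sub>M N2) (\<lambda>x. (X x, Y x))"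
    using ind unfolding Q.indep_var_distribution_eq by auto
  interpret DX: prob_space "distr Q N1 X" by (rule Q.prob_space_distr[OF rvX])
  interpret DY: prob_space "distr Q N2 Y" by (rule Q.prob_space_distr[OF rvY])
  interpret DXY: pair_prob_space "distr Q N1 X" "distr Q N2 Y" ..
  have Fm: "(\<lambda>(x,y). F x y) \<in> borel_measurable (distr Q N1 X \<Otimes>\<^sub>M distr Q N2 Y)"
    using F by (simp cong: measurable_cong_sets)
  have intF: "integrable (distr Q N1 X \<Otimes>\<^sub>M distr Q N2 Y) (\<lambda>(x,y). F x y)"
    using bnd by (intro DXY.P.integrable_const_bound[where B=C] Fm) (auto split: prod.split)
  have "(\<integral>\<omega>. F (X \<omega>) (Y \<omega>) \<partial>Q) = (\<integral>p. (\<lambda>(x,y). F x y) p \<partial>distr Q (N1 \<Otimes>\<^sub>M N2) (\<lambda>x. (X x, Y x)))"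
    by (subst integral_distr) (auto intro!: measurable_Pair rvX rvY F)
  also have "\<dots> = (\<integral>p. (\<lambda>(x,y). F x y) p \<partial>(distr Q N1 X \<Otimes>\<^sub>M distr Q N2 Y))"
    by (simp add: eqd)
  also have "\<dots> = (\<integral>x. (\<integral>y. F x y \<partial>distr Q N2 Y) \<partial>distr Q N1 X)"
    by (rule DXY.integral_fst[OF intF, symmetric])
  also have "\<dots> = (\<integral>\<omega>. (\<integral>y. F (X \<omega>) y \<partial>distr Q N2 Y) \<partial>Q)"
  proof (rule integral_distr[OF rvX])
    show "(\<lambda>x. \<integral>y. F x y \<partial>distr Q N2 Y) \<in> borel_measurable N1"
      using DY.borel_measurable_lebesgue_integral[of F N1] F by (simp cong: measurable_cong_sets)
  qed
  also have "\<dots> = (\<integral>\<omega>. (\<integral>\<omega>'. F (X \<omega>) (Y \<omega>') \<partial>Q) \<partial>Q)"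
  proof (rule Bochner_Integration.integral_cong[OF refl])
    fix \<omega> assume "\<omega> \<in> space Q"
    hence "X \<omega> \<in> space N1" using rvX by (auto dest: measurable_space)
    hence "(\<lambda>y. F (X \<omega>) y) \<in> borel_measurable N2" using F by measurable
    thus "(\<integral>y. F (X \<omega>) y \<partial>distr Q N2 Y) = (\<integral>\<omega>'. F (X \<omega>) (Y \<omega>') \<partial>Q)"
      by (rule integral_distr[OF rvY])
  qed
  finally show ?thesis .
qed

lemma maj_alg:
  fixes a r t :: real and M :: nat
  assumes a: "0 < a" and r: "0 < r" "r \<le> 1" and t: "0 \<le> t" and M: "1 \<le> M"
    and gs: "a^2 * (1 - r^2) \<le> 4 * t^2 * r^2"
  shows "2 * a * ((real M * ((1 - r)/2) * (1 - (1 - r)/2)) / (real M * ((1 - r)/2) * (1 - (1 - r)/2) + (real M * r / 2)^2))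
           \<le> 2 * t / sqrt (real M)"
proof -
  define u where "u = sqrt (1 - r^2)"
  define s where "s = sqrt (real M)"
  have r2: "r^2 \<le> 1" using r by (intro power_le_one) auto
  have u0: "0 \<le> u" using r2 by (simp add: u_def)
  have uu: "u^2 = 1 - r^2" using r2 by (simp add: u_def)
  have s0: "0 < s" using M by (simp add: s_def)
  have ss: "s^2 = real M" by (simp add: s_def)
  have au: "a * u \<le> 2 * t * r"
  proof -
    have "(a * u)^2 \<le> (2 * t * r)^2" using gs by (simp add: power_mult_distrib uu)
    moreover have "0 \<le> 2 * t * r" using t r by simp
    ultimately show ?thesis by (rule power2_le_imp_le)
  qed
  have key: "a * u^2 * s \<le> t * (u^2 + s^2 * r^2)"
  proof -
    have "a * u^2 * s = (a * u) * (u * s)" by (simp add: power2_eq_square)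
    also have "\<dots> \<le> (2 * t * r) * (u * s)" using au u0 s0 by (intro mult_right_mono) auto
    also have "\<dots> = t * (2 * u * (s * r))" by simp
    also have "\<dots> \<le> t * (u^2 + (s*r)^2)"
    proof -
      have "0 \<le> (u - s*r)^2" by simp
      hence "2 * u * (s * r) \<le> u^2 + (s*r)^2" by (simp add: power2_diff)
      thus ?thesis using t by (intro mult_left_mono) auto
    qed
    finally show ?thesis by (simp add: power_mult_distrib)
  qed
  have V0: "(1 - r)/2 * (1 - (1 - r)/2) = (1 - r^2)/4"
    by (simp add: field_simps power2_eq_square)
  have V: "real M * ((1 - r)/2) * (1 - (1 - r)/2) = real M * u^2 / 4"
    using V0 uu by (simp add: mult.assoc)
  have D: "real M * u^2 / 4 + (real M * r / 2)^2 = real M * (u^2 + real M * r^2) / 4"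
    by (simp add: power_mult_distrib power_divide algebra_simps power2_eq_square)
  have Dpos: "0 < u^2 + real M * r^2" using r M by (simp add: add_nonneg_pos u0)
  have "(real M * u^2 / 4) / (real M * (u^2 + real M * r^2) / 4) = u^2 / (u^2 + real M * r^2)"
    using M by simp
  hence "2 * a * ((real M * u^2 / 4) / (real M * (u^2 + real M * r^2) / 4)) = 2 * (a * u^2) / (u^2 + real M * r^2)"
    by simp
  also have "\<dots> \<le> 2 * t / s"
  proof -
    have "a * u^2 * s \<le> t * (u^2 + real M * r^2)" using key ss by simp
    hence "(a * u^2) / (u^2 + real M * r^2) \<le> t / s" using Dpos s0 by (simp add: divide_le_eq le_divide_eq mult.commute)
    thus ?thesis by (simp add: divide_right_mono)
  qed
  finally show ?thesis unfolding V D s_def .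
qed

locale sgd = smooth f g L
  for f :: "real^'d \<Rightarrow> real" and g and L +
  fixes fstar :: real and sigma :: "real^'d" and P :: "'w measure"
    and G :: "real^'d \<Rightarrow> 'w \<Rightarrow> real^'d" and Q :: "'a measure"
    and W :: "nat \<times> nat \<times> nat \<Rightarrow> 'a \<Rightarrow> 'w" and K M :: nat and x0 :: "real^'d"
  assumes A1: "\<And>x. f x \<ge> fstar"
    and P_prob: "prob_space P"
    and G_meas: "(\<lambda>(x, w). G x w) \<in> borel_measurable (borel \<Otimes>\<^sub>M P)"
    and sigma_nonneg: "\<And>i. sigma $ i \<ge> 0"
    and A3_int: "\<And>x i. integrable P (\<lambda>w. G x w $ i)"
    and A3_mean: "\<And>x i. (\<integral>w. G x w $ i \<partial>P) = g x $ i"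
    and A3_var: "\<And>x i. (\<integral>\<^sup>+ w. ennreal ((G x w $ i - g x $ i)^2) \<partial>P) \<le> ennreal ((sigma $ i)^2)"
    and L_pos: "l1 L > 0"
    and K_pos: "K \<ge> 1" and M_pos: "M \<ge> 1"
    and Q_prob: "prob_space Q"
    and W_indep: "prob_space.indep_vars Q (\<lambda>_. P) W ({..<K} \<times> {..<M} \<times> {..<K})"
    and W_law: "\<And>t. t \<in> {..<K} \<times> {..<M} \<times> {..<K} \<Longrightarrow> distr Q P (W t) = P"

sublocale sgd \<subseteq> Q: prob_space Q by (rule sgd.Q_prob[OF sgd_axioms])
sublocale sgd \<subseteq> PP: prob_space P by (rule sgd.P_prob[OF sgd_axioms])

context sgd
begin

definition "dl = 1 / sqrt (l1 L * real K)"
definition "II = {..<K} \<times> {..<M} \<times> {..<K}"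
definition "Ilt k = {..<k} \<times> {..<M} \<times> {..<K}"
definition "Blk k = {k} \<times> {..<M} \<times> {..<K}"
definition "vote k x ws = vsgn (\<Sum>m<M. vsgn (minibatch G K x (\<lambda>j. ws (k,m,j))))"
definition "traj ws k = signsgd_mv G M (\<lambda>_. dl) (\<lambda>_. K) x0 ws k"

lemma dl_pos: "0 < dl" using L_pos K_pos by (simp add: dl_def)

lemma traj_0: "traj ws 0 = x0" by (simp add: traj_def)

lemma traj_Suc: "traj ws (Suc k) = traj ws k - dl *\<^sub>R vote k (traj ws k) ws"
  by (simp add: traj_def vote_def Let_def)

lemma vote_cong:
  assumes "\<And>m j. m < M \<Longrightarrow> j < K \<Longrightarrow> ws (k,m,j) = ws' (k,m,j)"
  shows "vote k x ws = vote k x ws'"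
  unfolding vote_def using assms by (intro arg_cong[where f=vsgn] sum.cong refl arg_cong[where f=vsgn] minibatch_cong) auto

lemma traj_cong:
  assumes "\<And>t. t \<in> Ilt k \<Longrightarrow> ws t = ws' t"
  shows "traj ws k = traj ws' k"
  using assms
proof (induction k)
  case 0 thus ?case by (simp add: traj_0)
next
  case (Suc k)
  have IH: "traj ws k = traj ws' k" using Suc.prems by (intro Suc.IH) (auto simp: Ilt_def)
  have "vote k (traj ws k) ws = vote k (traj ws k) ws'"
    using Suc.prems by (intro vote_cong) (auto simp: Ilt_def)
  thus ?case by (simp add: traj_Suc IH)
qed

lemma vote_abs: "\<bar>vote k x ws $ i\<bar> \<le> 1" unfolding vote_def by (rule vsgn_abs_le)

lemma norm_vote: "norm (vote k x ws) \<le> real CARD('d)" unfolding vote_def by (rule norm_vsgn_le)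

lemma traj_dist: "dist (traj ws k) x0 \<le> real k * (dl * real CARD('d))"
proof (induction k)
  case 0 thus ?case by (simp add: traj_0)
next
  case (Suc k)
  have "dist (traj ws (Suc k)) x0 \<le> dist (traj ws (Suc k)) (traj ws k) + dist (traj ws k) x0"
    by (rule dist_triangle)
  also have "dist (traj ws (Suc k)) (traj ws k) = dl * norm (vote k (traj ws k) ws)"
    using dl_pos by (simp add: traj_Suc dist_norm)
  also have "\<dots> \<le> dl * real CARD('d)" using dl_pos norm_vote by (intro mult_left_mono) auto
  finally show ?case using Suc.IH by (simp add: algebra_simps)
qed

lemma W_meas: "t \<in> II \<Longrightarrow> W t \<in> Q \<rightarrow>\<^sub>M P"
  using W_indep unfolding Q.indep_vars_def II_def by auto

lemma meas_G: "xi \<in> borel_measurable N \<Longrightarrow> w \<in> N \<rightarrow>\<^sub>M P \<Longrightarrow> (\<lambda>z. G (xi z) (w z)) \<in> borel_measurable N"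
  by (rule measurable_Pair_compose_split[OF G_meas])

lemma meas_vote:
  assumes xi: "xi \<in> borel_measurable N"
    and ws: "\<And>m j. m < M \<Longrightarrow> j < K \<Longrightarrow> (\<lambda>z. ws z (k,m,j)) \<in> N \<rightarrow>\<^sub>M P"
  shows "(\<lambda>z. vote k (xi z) (ws z)) \<in> borel_measurable N"
  unfolding vote_def
  by (intro meas_vsgn borel_measurable_sum meas_minibatch[OF G_meas xi]) (use ws in auto)

lemma traj_meas_PiM:
  assumes "Ilt k \<subseteq> J"
  shows "(\<lambda>a. traj a k) \<in> borel_measurable (PiM J (\<lambda>_. P))"
  using assms
proof (induction k)
  case 0 thus ?case by (simp add: traj_0)
next
  case (Suc k)
  have IH: "(\<lambda>a. traj a k) \<in> borel_measurable (PiM J (\<lambda>_. P))"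
    using Suc.prems by (intro Suc.IH) (auto simp: Ilt_def)
  have "(\<lambda>a. vote k (traj a k) a) \<in> borel_measurable (PiM J (\<lambda>_. P))"
  proof (rule meas_vote[OF IH])
    fix m j assume "m < M" "j < K"
    hence "(k,m,j) \<in> J" using Suc.prems by (auto simp: Ilt_def)
    thus "(\<lambda>z. z (k,m,j)) \<in> PiM J (\<lambda>_. P) \<rightarrow>\<^sub>M P" by (rule measurable_component_singleton)
  qed
  thus ?case unfolding traj_Suc using IH by measurable
qed

lemma traj_meas_Q:
  assumes "k \<le> K"
  shows "(\<lambda>\<omega>. traj (\<lambda>t. W t \<omega>) k) \<in> borel_measurable Q"
proof -
  have rv: "(\<lambda>\<omega>. restrict (\<lambda>t. W t \<omega>) (Ilt k)) \<in> Q \<rightarrow>\<^sub>M PiM (Ilt k) (\<lambda>_. P)"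
    using assms by (intro measurable_restrict W_meas) (auto simp: Ilt_def II_def)
  have "(\<lambda>\<omega>. traj (restrict (\<lambda>t. W t \<omega>) (Ilt k)) k) \<in> borel_measurable Q"
    by (rule measurable_compose[OF rv traj_meas_PiM]) simp
  moreover have "traj (restrict (\<lambda>t. W t \<omega>) (Ilt k)) k = traj (\<lambda>t. W t \<omega>) k" for \<omega>
    by (intro traj_cong) auto
  ultimately show ?thesis by simp
qed

end

lemma var_sum:
  fixes Y :: "'i \<Rightarrow> 'a \<Rightarrow> real"
  assumes Qp: "prob_space Q" and A: "finite A"
    and int: "\<And>j. j \<in> A \<Longrightarrow> integrable Q (Y j)"
    and int2: "\<And>j. j \<in> A \<Longrightarrow> integrable Q (\<lambda>\<omega>. (Y j \<omega>)^2)"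
    and m0: "\<And>j. j \<in> A \<Longrightarrow> (\<integral>\<omega>. Y j \<omega> \<partial>Q) = 0"
    and ind: "\<And>j j'. j \<in> A \<Longrightarrow> j' \<in> A \<Longrightarrow> j \<noteq> j' \<Longrightarrow> prob_space.indep_var Q borel (Y j) borel (Y j')"
  shows "integrable Q (\<lambda>\<omega>. (\<Sum>j\<in>A. Y j \<omega>)^2)"
    and "(\<integral>\<omega>. (\<Sum>j\<in>A. Y j \<omega>)^2 \<partial>Q) = (\<Sum>j\<in>A. \<integral>\<omega>. (Y j \<omega>)^2 \<partial>Q)"
proof -
  interpret Q: prob_space Q by fact
  have eq: "(\<lambda>\<omega>. (\<Sum>j\<in>A. Y j \<omega>)^2) = (\<lambda>\<omega>. \<Sum>j\<in>A. \<Sum>j'\<in>A. Y j \<omega> * Y j' \<omega>)"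
    by (simp add: power2_eq_square sum_product)
  have tint: "integrable Q (\<lambda>\<omega>. Y j \<omega> * Y j' \<omega>)" if "j \<in> A" "j' \<in> A" for j j'
  proof (cases "j = j'")
    case True thus ?thesis using int2[OF that(1)] by (simp add: power2_eq_square)
  next
    case False thus ?thesis using Q.indep_var_integrable[OF ind[OF that False] int[OF that(1)] int[OF that(2)]] by simp
  qed
  show "integrable Q (\<lambda>\<omega>. (\<Sum>j\<in>A. Y j \<omega>)^2)"
    unfolding eq by (auto intro!: Bochner_Integration.integrable_sum tint)
  have "(\<integral>\<omega>. (\<Sum>j\<in>A. Y j \<omega>)^2 \<partial>Q) = (\<Sum>j\<in>A. \<Sum>j'\<in>A. \<integral>\<omega>. Y j \<omega> * Y j' \<omega> \<partial>Q)"
    unfolding eq by (simp add: Bochner_Integration.integral_sum Bochner_Integration.integrable_sum tint)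
  also have "\<dots> = (\<Sum>j\<in>A. \<Sum>j'\<in>A. if j' = j then \<integral>\<omega>. (Y j \<omega>)^2 \<partial>Q else 0)"
  proof (intro sum.cong refl)
    fix j j' assume jj: "j \<in> A" "j' \<in> A"
    show "(\<integral>\<omega>. Y j \<omega> * Y j' \<omega> \<partial>Q) = (if j' = j then \<integral>\<omega>. (Y j \<omega>)^2 \<partial>Q else 0)"
    proof (cases "j' = j")
      case True thus ?thesis by (simp add: power2_eq_square)
    next
      case False
      have "(\<integral>\<omega>. Y j \<omega> * Y j' \<omega> \<partial>Q) = (\<integral>\<omega>. Y j \<omega> \<partial>Q) * (\<integral>\<omega>. Y j' \<omega> \<partial>Q)"
        using False by (intro Q.indep_var_lebesgue_integral ind jj int) auto
      thus ?thesis using m0 jj False by simp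
    qed
  qed
  also have "\<dots> = (\<Sum>j\<in>A. \<integral>\<omega>. (Y j \<omega>)^2 \<partial>Q)" using A by simp
  finally show "(\<integral>\<omega>. (\<Sum>j\<in>A. Y j \<omega>)^2 \<partial>Q) = (\<Sum>j\<in>A. \<integral>\<omega>. (Y j \<omega>)^2 \<partial>Q)" .
qed

context sgd
begin

lemma indep_pair_W:
  assumes "t1 \<in> II" "t2 \<in> II" "t1 \<noteq> t2"
  shows "Q.indep_var P (W t1) P (W t2)"
proof -
  have "Q.indep_var (PiM {t1} (\<lambda>_. P)) (\<lambda>\<omega>. restrict (\<lambda>i. W i \<omega>) {t1}) (PiM {t2} (\<lambda>_. P)) (\<lambda>\<omega>. restrict (\<lambda>i. W i \<omega>) {t2})"
    using assms by (intro Q.indep_var_restrict[OF W_indep]) (auto simp: II_def)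
  from Q.indep_var_compose[OF this measurable_component_singleton[of t1 "{t1}"] measurable_component_singleton[of t2 "{t2}"]]
  show ?thesis by (simp add: o_def)
qed

lemma law_int:
  assumes t: "t \<in> II" and h: "h \<in> borel_measurable P"
  shows "(\<integral>\<omega>. h (W t \<omega>) \<partial>Q) = (\<integral>w. (h w :: real) \<partial>P)"
  using integral_distr[OF W_meas[OF t] h] W_law[of t] t by (simp add: II_def)

lemma law_integrable:
  assumes t: "t \<in> II" and h: "h \<in> borel_measurable P"
  shows "integrable Q (\<lambda>\<omega>. h (W t \<omega>) :: real) \<longleftrightarrow> integrable P h"
  using integrable_distr_eq[OF W_meas[OF t] h] W_law[of t] t by (simp add: II_def)

lemma Gi_meas: "(\<lambda>w. G x w $ i) \<in> borel_measurable P"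
proof -
  have "(\<lambda>w. G x w) \<in> borel_measurable P"
    by (rule meas_G) auto
  thus ?thesis by (rule measurable_compose[OF _ borel_measurable_nth])
qed

lemma hY_facts:
  shows "integrable P (\<lambda>w. G x w $ i - g x $ i)"
    and "(\<integral>w. G x w $ i - g x $ i \<partial>P) = 0"
    and "integrable P (\<lambda>w. (G x w $ i - g x $ i)^2)"
    and "(\<integral>w. (G x w $ i - g x $ i)^2 \<partial>P) \<le> (sigma $ i)^2"
proof -
  show "integrable P (\<lambda>w. G x w $ i - g x $ i)" using A3_int[of x i] by simp
  show "(\<integral>w. G x w $ i - g x $ i \<partial>P) = 0"
    using A3_int[of x i] A3_mean[of x i] by (simp add: PP.prob_space)
  have m: "(\<lambda>w. (G x w $ i - g x $ i)^2) \<in> borel_measurable P" using Gi_meas[of x i] by measurable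
  have fin: "(\<integral>\<^sup>+ w. ennreal ((G x w $ i - g x $ i)^2) \<partial>P) < \<infinity>"
    using A3_var[of x i] by (simp add: le_less_trans)
  show int2: "integrable P (\<lambda>w. (G x w $ i - g x $ i)^2)"
    by (rule integrableI_nonneg[OF m _ fin]) auto
  have "ennreal (\<integral>w. (G x w $ i - g x $ i)^2 \<partial>P) = (\<integral>\<^sup>+ w. ennreal ((G x w $ i - g x $ i)^2) \<partial>P)"
    by (rule nn_integral_eq_integral[OF int2, symmetric]) auto
  also have "\<dots> \<le> ennreal ((sigma $ i)^2)" by (rule A3_var)
  finally show "(\<integral>w. (G x w $ i - g x $ i)^2 \<partial>P) \<le> (sigma $ i)^2" by (simp add: ennreal_le_iff)
qed

end

context sgd
begin

definition "Yv k x m j i \<omega> = G x (W (k,m,j) \<omega>) $ i - g x $ i"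
definition "mbv k x m \<omega> = minibatch G K x (\<lambda>j. W (k,m,j) \<omega>)"
definition "Zn k x m i \<omega> = mbv k x m \<omega> $ i - g x $ i"

lemma in_II: "k < K \<Longrightarrow> m < M \<Longrightarrow> j < K \<Longrightarrow> (k,m,j) \<in> II" by (simp add: II_def)

lemma hY_meas: "(\<lambda>w. G x w $ i - g x $ i) \<in> borel_measurable P"
  using Gi_meas[of x i] by measurable

lemma Yv_facts:
  assumes "k < K" "m < M" "j < K"
  shows "integrable Q (Yv k x m j i)"
    and "(\<integral>\<omega>. Yv k x m j i \<omega> \<partial>Q) = 0"
    and "integrable Q (\<lambda>\<omega>. (Yv k x m j i \<omega>)^2)"
    and "(\<integral>\<omega>. (Yv k x m j i \<omega>)^2 \<partial>Q) \<le> (sigma $ i)^2"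
proof -
  have t: "(k,m,j) \<in> II" using assms by (rule in_II)
  have h2: "(\<lambda>w. (G x w $ i - g x $ i)^2) \<in> borel_measurable P" using Gi_meas[of x i] by measurable
  show "integrable Q (Yv k x m j i)"
    using law_integrable[OF t hY_meas] hY_facts(1) by (simp add: Yv_def[abs_def])
  show "(\<integral>\<omega>. Yv k x m j i \<omega> \<partial>Q) = 0"
    using law_int[OF t hY_meas] hY_facts(2) by (simp add: Yv_def[abs_def])
  show "integrable Q (\<lambda>\<omega>. (Yv k x m j i \<omega>)^2)"
    using law_integrable[OF t h2] hY_facts(3) by (simp add: Yv_def[abs_def])
  show "(\<integral>\<omega>. (Yv k x m j i \<omega>)^2 \<partial>Q) \<le> (sigma $ i)^2"
    using law_int[OF t h2] hY_facts(4) by (simp add: Yv_def[abs_def])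
qed

lemma Yv_indep:
  assumes "k < K" "m < M" "j < K" "j' < K" "j \<noteq> j'"
  shows "Q.indep_var borel (Yv k x m j i) borel (Yv k x m j' i)"
proof -
  have "Q.indep_var P (W (k,m,j)) P (W (k,m,j'))"
    using assms by (intro indep_pair_W in_II) auto
  from Q.indep_var_compose[OF this hY_meas hY_meas]
  show ?thesis by (simp add: o_def Yv_def[abs_def])
qed

lemma Zn_eq: "Zn k x m i \<omega> = (1 / real K) * (\<Sum>j<K. Yv k x m j i \<omega>)"
proof -
  have "Zn k x m i \<omega> = (1 / real K) * (\<Sum>j<K. G x (W (k,m,j) \<omega>) $ i) - g x $ i"
    by (simp add: Zn_def mbv_def minibatch_def)
  also have "\<dots> = (1 / real K) * ((\<Sum>j<K. G x (W (k,m,j) \<omega>) $ i) - real K * g x $ i)"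
    using K_pos by (simp add: field_simps)
  also have "(\<Sum>j<K. G x (W (k,m,j) \<omega>) $ i) - real K * g x $ i = (\<Sum>j<K. Yv k x m j i \<omega>)"
    by (simp add: Yv_def sum_subtractf)
  finally show ?thesis .
qed

lemma Zn_facts:
  assumes "k < K" "m < M"
  shows "integrable Q (Zn k x m i)"
    and "(\<integral>\<omega>. Zn k x m i \<omega> \<partial>Q) = 0"
    and "integrable Q (\<lambda>\<omega>. (Zn k x m i \<omega>)^2)"
    and "(\<integral>\<omega>. (Zn k x m i \<omega>)^2 \<partial>Q) \<le> (sigma $ i)^2 / real K"
proof -
  have eqf: "Zn k x m i = (\<lambda>\<omega>. (1 / real K) * (\<Sum>j<K. Yv k x m j i \<omega>))"
    by (simp add: fun_eq_iff Zn_eq)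
  note Yf = Yv_facts[OF assms]
  show "integrable Q (Zn k x m i)" unfolding eqf
    by (intro integrable_mult_right Bochner_Integration.integrable_sum Yf(1)) auto
  show "(\<integral>\<omega>. Zn k x m i \<omega> \<partial>Q) = 0" unfolding eqf using Yf(1,2)
    by (simp add: Bochner_Integration.integral_sum)
  have vs: "integrable Q (\<lambda>\<omega>. (\<Sum>j\<in>{..<K}. Yv k x m j i \<omega>)^2)"
     "(\<integral>\<omega>. (\<Sum>j\<in>{..<K}. Yv k x m j i \<omega>)^2 \<partial>Q) = (\<Sum>j\<in>{..<K}. \<integral>\<omega>. (Yv k x m j i \<omega>)^2 \<partial>Q)"
    using Yf assms by (intro var_sum[OF Q_prob] Yv_indep; auto)+
  have eq2: "(\<lambda>\<omega>. (Zn k x m i \<omega>)^2) = (\<lambda>\<omega>. (1 / real K)^2 * (\<Sum>j\<in>{..<K}. Yv k x m j i \<omega>)^2)"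
    by (simp add: fun_eq_iff Zn_eq power_divide)
  show "integrable Q (\<lambda>\<omega>. (Zn k x m i \<omega>)^2)" unfolding eq2 using vs(1) by auto
  have "(\<integral>\<omega>. (Zn k x m i \<omega>)^2 \<partial>Q) = (1 / real K)^2 * (\<Sum>j\<in>{..<K}. \<integral>\<omega>. (Yv k x m j i \<omega>)^2 \<partial>Q)"
    unfolding eq2 using vs by simp
  also have "\<dots> \<le> (1 / real K)^2 * (\<Sum>j\<in>{..<K}. (sigma $ i)^2)"
    using Yf(4) by (intro mult_left_mono sum_mono) auto
  also have "\<dots> = (sigma $ i)^2 / real K" using K_pos by (simp add: power2_eq_square)
  finally show "(\<integral>\<omega>. (Zn k x m i \<omega>)^2 \<partial>Q) \<le> (sigma $ i)^2 / real K" .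
qed

end

context sgd
begin

lemma intb: "h \<in> borel_measurable Q \<Longrightarrow> (\<And>\<omega>. \<bar>h \<omega>\<bar> \<le> B) \<Longrightarrow> integrable Q (h :: 'a \<Rightarrow> real)"
  by (intro Q.integrable_const_bound[where B=B]) auto

lemma mbv_meas: "k < K \<Longrightarrow> m < M \<Longrightarrow> mbv k x m \<in> borel_measurable Q"
  unfolding mbv_def[abs_def] by (intro meas_minibatch[OF G_meas] W_meas in_II) auto

lemma mbv_i_meas: "k < K \<Longrightarrow> m < M \<Longrightarrow> (\<lambda>\<omega>. mbv k x m \<omega> $ i) \<in> borel_measurable Q"
  using measurable_compose[OF mbv_meas borel_measurable_nth] by simp

lemma Zn_meas: "k < K \<Longrightarrow> m < M \<Longrightarrow> Zn k x m i \<in> borel_measurable Q"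
  unfolding Zn_def[abs_def] by (intro borel_measurable_diff mbv_i_meas borel_measurable_const)

definition "badv k x m i \<omega> = (if g x $ i * mbv k x m \<omega> $ i \<le> 0 then 1 else 0 :: real)"

lemma badv_meas: "k < K \<Longrightarrow> m < M \<Longrightarrow> badv k x m i \<in> borel_measurable Q"
proof -
  assume a: "k < K" "m < M"
  note [measurable] = mbv_i_meas[OF a, of x i]
  show "badv k x m i \<in> borel_measurable Q" unfolding badv_def[abs_def] by measurable
qed

lemma vote_W_nth: "vote k x (\<lambda>t. W t \<omega>) $ i = sgn (\<Sum>m<M. sgn (mbv k x m \<omega> $ i))"
  by (simp add: vote_def mbv_def)

lemma vote_W_meas: "k < K \<Longrightarrow> (\<lambda>\<omega>. vote k x (\<lambda>t. W t \<omega>)) \<in> borel_measurable Q"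
  by (intro meas_vote W_meas in_II) auto

lemma vote_i_meas: "k < K \<Longrightarrow> (\<lambda>\<omega>. vote k x (\<lambda>t. W t \<omega>) $ i) \<in> borel_measurable Q"
  using measurable_compose[OF vote_W_meas borel_measurable_nth] by simp

lemma vote_pw:
  "\<bar>g x $ i\<bar> - 2 * \<bar>g x $ i\<bar> * (if 2 * (\<Sum>m<M. badv k x m i \<omega>) \<ge> real M then 1 else 0)
     \<le> g x $ i * vote k x (\<lambda>t. W t \<omega>) $ i"
  unfolding vote_W_nth badv_def by (rule majority_pw)

lemma bad_prob:
  assumes k: "k < K" and m: "m < M" and gnz: "g x $ i \<noteq> 0"
  shows "Q.prob {\<omega>\<in>space Q. g x $ i * mbv k x m \<omega> $ i \<le> 0}
          \<le> ((sigma $ i)^2 / real K) / ((sigma $ i)^2 / real K + (g x $ i)^2)"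
proof -
  let ?gm = "g x $ i"
  define Y where "Y = (\<lambda>\<omega>. - sgn ?gm * Zn k x m i \<omega>)"
  note Zf = Zn_facts[OF k m, of x i]
  have sq: "(sgn ?gm)^2 = 1" using gnz by (simp add: sgn_if)
  have Yi: "integrable Q Y" unfolding Y_def using Zf(1) by auto
  have Y2eq: "(\<lambda>\<omega>. (Y \<omega>)^2) = (\<lambda>\<omega>. (Zn k x m i \<omega>)^2)"
    unfolding Y_def by (simp add: fun_eq_iff power_mult_distrib sq)
  have Y2: "integrable Q (\<lambda>\<omega>. (Y \<omega>)^2)" unfolding Y2eq by (rule Zf(3))
  have Ym: "(\<integral>\<omega>. Y \<omega> \<partial>Q) = 0" unfolding Y_def using Zf(2) by simp
  have Yv: "(\<integral>\<omega>. (Y \<omega>)^2 \<partial>Q) \<le> (sigma $ i)^2 / real K" unfolding Y2eq by (rule Zf(4))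
  have c: "0 < \<bar>?gm\<bar>" using gnz by simp
  have "{\<omega>\<in>space Q. ?gm * mbv k x m \<omega> $ i \<le> 0} = {\<omega>\<in>space Q. \<bar>?gm\<bar> \<le> Y \<omega>}"
  proof -
    have "?gm * mbv k x m \<omega> $ i \<le> 0 \<longleftrightarrow> \<bar>?gm\<bar> \<le> Y \<omega>" for \<omega>
    proof -
      have mb: "mbv k x m \<omega> $ i = ?gm + Zn k x m i \<omega>" by (simp add: Zn_def)
      show ?thesis
      proof (cases "?gm > 0")
        case True
        have "?gm * (?gm + Zn k x m i \<omega>) \<le> 0 \<longleftrightarrow> ?gm + Zn k x m i \<omega> \<le> 0"
          using True by (auto simp: mult_le_0_iff)
        thus ?thesis unfolding mb Y_def using True by auto
      next
        case False
        hence neg: "?gm < 0" using gnz by simp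
        have "?gm * (?gm + Zn k x m i \<omega>) \<le> 0 \<longleftrightarrow> 0 \<le> ?gm + Zn k x m i \<omega>"
          using neg by (auto simp: mult_le_0_iff)
        thus ?thesis unfolding mb Y_def using neg by auto
      qed
    qed
    thus ?thesis by auto
  qed
  also have "Q.prob \<dots> \<le> ((sigma $ i)^2 / real K) / ((sigma $ i)^2 / real K + \<bar>?gm\<bar>^2)"
    by (rule cantelli[OF Q_prob Yi Y2 Ym Yv c])
  finally show ?thesis by simp
qed

end

context sgd
begin

lemma int_badv: "(\<integral>\<omega>. badv k x m i \<omega> \<partial>Q) = Q.prob {\<omega>\<in>space Q. g x $ i * mbv k x m \<omega> $ i \<le> 0}"
proof -
  have "badv k x m i = indicator {\<omega>. g x $ i * mbv k x m \<omega> $ i \<le> 0}"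
    by (simp add: fun_eq_iff badv_def indicator_def)
  hence "(\<integral>\<omega>. badv k x m i \<omega> \<partial>Q) = measure Q ({\<omega>. g x $ i * mbv k x m \<omega> $ i \<le> 0} \<inter> space Q)"
    by (simp add: Bochner_Integration.integral_indicator)
  also have "{\<omega>. g x $ i * mbv k x m \<omega> $ i \<le> 0} \<inter> space Q = {\<omega>\<in>space Q. g x $ i * mbv k x m \<omega> $ i \<le> 0}" by auto
  finally show ?thesis .
qed

lemma badv_01: "0 \<le> badv k x m i \<omega>" "badv k x m i \<omega> \<le> 1" by (auto simp: badv_def)

lemma coord_a:
  assumes k: "k < K"
  shows "\<bar>g x $ i\<bar> - 2 * (sigma $ i / sqrt (real K)) \<le> (\<integral>\<omega>. g x $ i * vote k x (\<lambda>t. W t \<omega>) $ i \<partial>Q)"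
proof (cases "g x $ i = 0")
  case True
  have "0 \<le> sigma $ i / sqrt (real K)" using sigma_nonneg[of i] by simp
  thus ?thesis using True by simp
next
  case False
  let ?gm = "g x $ i"
  let ?a = "\<bar>?gm\<bar>"
  define t where "t = sigma $ i / sqrt (real K)"
  have t0: "0 \<le> t" using sigma_nonneg[of i] by (simp add: t_def)
  have t2: "t^2 = (sigma $ i)^2 / real K" using K_pos by (simp add: t_def power_divide)
  have a0: "0 < ?a" using False by simp
  define bnd where "bnd = t^2 / (t^2 + ?a^2)"
  have pw: "?a - (4 * ?a / real M) * (\<Sum>m<M. badv k x m i \<omega>) \<le> ?gm * vote k x (\<lambda>t. W t \<omega>) $ i" for \<omega>
  proof -
    let ?nb = "\<Sum>m<M. badv k x m i \<omega>"
    have nb0: "0 \<le> ?nb" by (intro sum_nonneg badv_01)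
    have "?a - (4 * ?a / real M) * ?nb \<le> ?a - 2 * ?a * (if 2 * ?nb \<ge> real M then 1 else 0)"
    proof (cases "2 * ?nb \<ge> real M")
      case True
      have "2 * ?a \<le> (4 * ?a / real M) * ?nb"
      proof -
        have "2 * ?a * real M \<le> 2 * ?a * (2 * ?nb)" using True a0 by (intro mult_left_mono) auto
        thus ?thesis using M_pos by (simp add: field_simps)
      qed
      thus ?thesis using True by simp
    next
      case F: False
      have "0 \<le> (4 * ?a / real M) * ?nb" using nb0 by simp
      thus ?thesis using F by simp
    qed
    also have "\<dots> \<le> ?gm * vote k x (\<lambda>t. W t \<omega>) $ i" by (rule vote_pw)
    finally show ?thesis .
  qed
  have intb_bad: "integrable Q (badv k x m i)" if "m < M" for m
    using badv_meas[OF k that] badv_01 by (intro intb[where B=1]) (auto simp: abs_le_iff)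
  have int_rhs: "integrable Q (\<lambda>\<omega>. ?gm * vote k x (\<lambda>t. W t \<omega>) $ i)"
  proof (rule intb[where B="?a"])
    show "(\<lambda>\<omega>. ?gm * vote k x (\<lambda>t. W t \<omega>) $ i) \<in> borel_measurable Q"
      using vote_i_meas[OF k, of x i] by simp
    fix \<omega>
    have "\<bar>?gm\<bar> * \<bar>vote k x (\<lambda>t. W t \<omega>) $ i\<bar> \<le> \<bar>?gm\<bar> * 1"
      by (intro mult_left_mono vote_abs) auto
    thus "\<bar>?gm * vote k x (\<lambda>t. W t \<omega>) $ i\<bar> \<le> ?a" by (simp add: abs_mult)
  qed
  have isum: "integrable Q (\<lambda>\<omega>. \<Sum>m<M. badv k x m i \<omega>)"
    by (intro Bochner_Integration.integrable_sum intb_bad) auto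
  have ilhs: "integrable Q (\<lambda>\<omega>. ?a - (4 * ?a / real M) * (\<Sum>m<M. badv k x m i \<omega>))"
    by (intro Bochner_Integration.integrable_diff Q.integrable_const integrable_mult_right isum)
  have "?a - (4 * ?a / real M) * (\<Sum>m<M. \<integral>\<omega>. badv k x m i \<omega> \<partial>Q)
        = (\<integral>\<omega>. ?a - (4 * ?a / real M) * (\<Sum>m<M. badv k x m i \<omega>) \<partial>Q)"
  proof -
    have "(\<integral>\<omega>. ?a - (4 * ?a / real M) * (\<Sum>m<M. badv k x m i \<omega>) \<partial>Q)
        = (\<integral>\<omega>. ?a \<partial>Q) - (\<integral>\<omega>. (4 * ?a / real M) * (\<Sum>m<M. badv k x m i \<omega>) \<partial>Q)"
      using isum by (intro Bochner_Integration.integral_diff) auto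
    also have "\<dots> = ?a - (4 * ?a / real M) * (\<integral>\<omega>. (\<Sum>m<M. badv k x m i \<omega>) \<partial>Q)"
      by (simp add: Q.prob_space)
    also have "(\<integral>\<omega>. (\<Sum>m<M. badv k x m i \<omega>) \<partial>Q) = (\<Sum>m<M. \<integral>\<omega>. badv k x m i \<omega> \<partial>Q)"
      by (intro Bochner_Integration.integral_sum intb_bad) auto
    finally show ?thesis by simp
  qed
  also have "\<dots> \<le> (\<integral>\<omega>. ?gm * vote k x (\<lambda>t. W t \<omega>) $ i \<partial>Q)"
    using ilhs int_rhs pw by (intro integral_mono)
  finally have A: "?a - (4 * ?a / real M) * (\<Sum>m<M. \<integral>\<omega>. badv k x m i \<omega> \<partial>Q) \<le> (\<integral>\<omega>. ?gm * vote k x (\<lambda>t. W t \<omega>) $ i \<partial>Q)" .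
  have "(\<Sum>m<M. \<integral>\<omega>. badv k x m i \<omega> \<partial>Q) \<le> (\<Sum>m<M. bnd)"
  proof (rule sum_mono)
    fix m assume "m \<in> {..<M}"
    hence m: "m < M" by simp
    show "(\<integral>\<omega>. badv k x m i \<omega> \<partial>Q) \<le> bnd"
      unfolding int_badv bnd_def t2 using bad_prob[OF k m False] by simp
  qed
  hence "(4 * ?a / real M) * (\<Sum>m<M. \<integral>\<omega>. badv k x m i \<omega> \<partial>Q) \<le> (4 * ?a / real M) * (real M * bnd)"
    using a0 by (intro mult_left_mono) auto
  also have "\<dots> = 4 * ?a * bnd" using M_pos by simp
  also have "\<dots> \<le> 2 * t"
  proof -
    have "0 \<le> (t - ?a)^2" by simp
    hence "2 * ?a * t \<le> t^2 + ?a^2" by (simp add: power2_diff mult.commute mult.left_commute)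
    hence h: "2 * t * (2 * ?a * t) \<le> 2 * t * (t^2 + ?a^2)" using t0 by (intro mult_left_mono) auto
    have e: "4 * ?a * t^2 = 2 * t * (2 * ?a * t)" by (simp add: power2_eq_square)
    have le: "4 * ?a * t^2 \<le> 2 * t * (t^2 + ?a^2)" using h e by linarith
    have pos: "0 < t^2 + ?a^2" using a0 by (simp add: add_nonneg_pos)
    have "4 * ?a * bnd = (4 * ?a * t^2) / (t^2 + ?a^2)" by (simp add: bnd_def)
    also have "\<dots> \<le> 2 * t" using le pos by (simp add: pos_divide_le_eq)
    finally show ?thesis .
  qed
  finally show ?thesis using A by (simp add: t_def)
qed

end

context sgd
begin

lemma worker_indep:
  assumes "k < K" "m < M"
  shows "Q.indep_vars (\<lambda>_. P) (\<lambda>j. W (k,m,j)) {..<K}"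
proof -
  have "Q.indep_vars (\<lambda>j. PiM {(k,m,j)} (\<lambda>_. P)) (\<lambda>j \<omega>. restrict (\<lambda>i. W i \<omega>) {(k,m,j)}) {..<K}"
    using assms by (intro Q.indep_vars_restrict[OF W_indep]) (auto simp: disjoint_family_on_def)
  hence "Q.indep_vars (\<lambda>_. P) (\<lambda>j \<omega>. restrict (\<lambda>i. W i \<omega>) {(k,m,j)} (k,m,j)) {..<K}"
    by (rule Q.indep_vars_compose2) (rule measurable_component_singleton, simp)
  thus ?thesis by simp
qed

lemma worker_dist:
  assumes "k < K" "m < M"
  shows "distr Q (PiM {..<K} (\<lambda>_. P)) (\<lambda>\<omega>. \<lambda>j\<in>{..<K}. W (k,m,j) \<omega>) = PiM {..<K} (\<lambda>_. P)"
proof -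
  have "0 \<in> {..<K}" using K_pos by simp
  hence ne: "{..<K} \<noteq> {}" by blast
  have "distr Q (PiM {..<K} (\<lambda>_. P)) (\<lambda>\<omega>. \<lambda>j\<in>{..<K}. W (k,m,j) \<omega>) = PiM {..<K} (\<lambda>j. distr Q P (W (k,m,j)))"
    using Q.indep_vars_iff_distr_eq_PiM'[OF ne, where M'="\<lambda>_. P" and X="\<lambda>j. W (k,m,j)"] worker_indep[OF assms]
      W_meas in_II assms by auto
  also have "\<dots> = PiM {..<K} (\<lambda>_. P)"
    using assms by (intro PiM_cong refl W_law) auto
  finally show ?thesis .
qed

lemma worker_law:
  assumes "k < K" "m < M"
  shows "distr Q borel (Zn k x m i) = minibatch_noise_law G P g K x i"
proof -
  define h where "h = (\<lambda>ws. minibatch G K x ws $ i - g x $ i)"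
  define rho where "rho = (\<lambda>\<omega>. \<lambda>j\<in>{..<K}. W (k,m,j) \<omega>)"
  have hm: "h \<in> borel_measurable (PiM {..<K} (\<lambda>_. P))"
  proof -
    have "(\<lambda>ws. minibatch G K x ws) \<in> borel_measurable (PiM {..<K} (\<lambda>_. P))"
      by (rule meas_minibatch[OF G_meas, where ws="\<lambda>z. z"]) (auto intro: measurable_component_singleton)
    from measurable_compose[OF this borel_measurable_nth, of i]
    have "(\<lambda>ws. minibatch G K x ws $ i) \<in> borel_measurable (PiM {..<K} (\<lambda>_. P))" by simp
    thus ?thesis unfolding h_def by (intro borel_measurable_diff borel_measurable_const)
  qed
  have rm: "rho \<in> Q \<rightarrow>\<^sub>M PiM {..<K} (\<lambda>_. P)"
    unfolding rho_def using assms by (intro measurable_restrict W_meas in_II) auto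
  have eq: "Zn k x m i = h \<circ> rho"
    by (auto simp: fun_eq_iff Zn_def mbv_def h_def rho_def intro!: arg_cong[where f="\<lambda>v. v $ i"] minibatch_cong)
  have "distr Q borel (Zn k x m i) = distr (distr Q (PiM {..<K} (\<lambda>_. P)) rho) borel h"
    unfolding eq by (rule distr_distr[OF hm rm, symmetric])
  also have "distr Q (PiM {..<K} (\<lambda>_. P)) rho = PiM {..<K} (\<lambda>_. P)"
    unfolding rho_def by (rule worker_dist[OF assms])
  finally show ?thesis by (simp add: minibatch_noise_law_def h_def)
qed

lemma q_eq:
  assumes k: "k < K" and m: "m < M" and gnz: "g x $ i \<noteq> 0"
    and sy: "symu (minibatch_noise_law G P g K x i)"
  shows "Q.prob {\<omega>\<in>space Q. g x $ i * mbv k x m \<omega> $ i \<le> 0} = measure (minibatch_noise_law G P g K x i) {..-\<bar>g x $ i\<bar>}"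
proof -
  let ?mu = "minibatch_noise_law G P g K x i"
  let ?gm = "g x $ i"
  have law: "?mu = distr Q borel (Zn k x m i)" using worker_law[OF k m] by simp
  have Zm: "Zn k x m i \<in> borel_measurable Q" by (rule Zn_meas[OF k m])
  have md: "measure ?mu A = Q.prob (Zn k x m i -` A \<inter> space Q)" if "A \<in> sets borel" for A
    unfolding law by (rule measure_distr[OF Zm that])
  have mb: "mbv k x m \<omega> $ i = ?gm + Zn k x m i \<omega>" for \<omega> by (simp add: Zn_def)
  show ?thesis
  proof (cases "?gm > 0")
    case True
    have "{\<omega>\<in>space Q. ?gm * mbv k x m \<omega> $ i \<le> 0} = Zn k x m i -` {..-\<bar>?gm\<bar>} \<inter> space Q"
    proof -
      have "?gm * mbv k x m \<omega> $ i \<le> 0 \<longleftrightarrow> Zn k x m i \<omega> \<le> - ?gm" for \<omega>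
        unfolding mb using True by (auto simp: mult_le_0_iff)
      thus ?thesis using True by auto
    qed
    thus ?thesis using md[of "{..-\<bar>?gm\<bar>}"] by simp
  next
    case False
    hence neg: "?gm < 0" using gnz by simp
    have "{\<omega>\<in>space Q. ?gm * mbv k x m \<omega> $ i \<le> 0} = Zn k x m i -` {\<bar>?gm\<bar>..} \<inter> space Q"
    proof -
      have "?gm * mbv k x m \<omega> $ i \<le> 0 \<longleftrightarrow> - ?gm \<le> Zn k x m i \<omega>" for \<omega>
        unfolding mb using neg by (auto simp: mult_le_0_iff)
      thus ?thesis using neg by auto
    qed
    hence "Q.prob {\<omega>\<in>space Q. ?gm * mbv k x m \<omega> $ i \<le> 0} = measure ?mu {\<bar>?gm\<bar>..}"
      using md[of "{\<bar>?gm\<bar>..}"] by simp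
    also have "\<dots> = measure ?mu {..-\<bar>?gm\<bar>}" by (rule symu.sym_ge[OF sy])
    finally show ?thesis .
  qed
qed

lemma badv_indep:
  assumes k: "k < K" and m: "m < M" "m' < M" "m \<noteq> m'"
  shows "Q.indep_var borel (badv k x m i) borel (badv k x m' i)"
proof -
  define A where "A = (\<lambda>m::nat. {k} \<times> {m} \<times> {..<K})"
  define h where "h = (\<lambda>(m::nat) (b::nat\<times>nat\<times>nat \<Rightarrow> 'w). if g x $ i * minibatch G K x (\<lambda>j. b (k,m,j)) $ i \<le> 0 then 1 else (0::real))"
  have hm: "h n \<in> borel_measurable (PiM (A n) (\<lambda>_. P))" for n
  proof -
    have "(\<lambda>b. minibatch G K x (\<lambda>j. b (k,n,j))) \<in> borel_measurable (PiM (A n) (\<lambda>_. P))"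
      by (rule meas_minibatch[OF G_meas]) (auto simp: A_def intro: measurable_component_singleton)
    from measurable_compose[OF this borel_measurable_nth, of i]
    have [measurable]: "(\<lambda>b. minibatch G K x (\<lambda>j. b (k,n,j)) $ i) \<in> borel_measurable (PiM (A n) (\<lambda>_. P))"
      by simp
    show ?thesis unfolding h_def by measurable
  qed
  have "Q.indep_var (PiM (A m) (\<lambda>_. P)) (\<lambda>\<omega>. restrict (\<lambda>t. W t \<omega>) (A m)) (PiM (A m') (\<lambda>_. P)) (\<lambda>\<omega>. restrict (\<lambda>t. W t \<omega>) (A m'))"
    using assms by (intro Q.indep_var_restrict[OF W_indep]) (auto simp: A_def)
  from Q.indep_var_compose[OF this hm hm]
  have "Q.indep_var borel (h m \<circ> (\<lambda>\<omega>. restrict (\<lambda>t. W t \<omega>) (A m))) borel (h m' \<circ> (\<lambda>\<omega>. restrict (\<lambda>t. W t \<omega>) (A m')))" .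
  moreover have "h n \<circ> (\<lambda>\<omega>. restrict (\<lambda>t. W t \<omega>) (A n)) = badv k x n i" for n
  proof -
    have "minibatch G K x (\<lambda>j. restrict (\<lambda>t. W t \<omega>) (A n) (k,n,j)) = mbv k x n \<omega>" for \<omega>
      unfolding mbv_def by (intro minibatch_cong) (auto simp: A_def)
    thus ?thesis by (simp add: fun_eq_iff h_def badv_def)
  qed
  ultimately show ?thesis by simp
qed

end

context sgd
begin

lemma maj_prob:
  assumes k: "k < K" and qq: "\<And>m. m < M \<Longrightarrow> Q.prob {\<omega>\<in>space Q. g x $ i * mbv k x m \<omega> $ i \<le> 0} = qq"
    and r: "0 < 1 - 2*qq"
  shows "Q.prob {\<omega>\<in>space Q. real M \<le> 2 * (\<Sum>m<M. badv k x m i \<omega>)}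
          \<le> (real M * qq * (1-qq)) / (real M * qq * (1-qq) + (real M * (1-2*qq)/2)^2)"
proof -
  define Y where "Y = (\<lambda>m \<omega>. badv k x m i \<omega> - qq)"
  have bm: "m < M \<Longrightarrow> badv k x m i \<in> borel_measurable Q" for m by (rule badv_meas[OF k])
  have bi: "m < M \<Longrightarrow> integrable Q (badv k x m i)" for m
    using bm badv_01 by (intro intb[where B=1]) (auto simp: abs_le_iff)
  have Eb: "m < M \<Longrightarrow> (\<integral>\<omega>. badv k x m i \<omega> \<partial>Q) = qq" for m using int_badv qq by simp
  have Yi: "m < M \<Longrightarrow> integrable Q (Y m)" for m unfolding Y_def using bi by auto
  have Ym: "m < M \<Longrightarrow> (\<integral>\<omega>. Y m \<omega> \<partial>Q) = 0" for m unfolding Y_def using bi Eb by (simp add: Q.prob_space)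
  have Y2eq: "(Y m \<omega>)^2 = (1 - 2*qq) * badv k x m i \<omega> + qq^2" for m \<omega>
    unfolding Y_def badv_def by (simp add: power2_eq_square algebra_simps)
  have Y2i: "m < M \<Longrightarrow> integrable Q (\<lambda>\<omega>. (Y m \<omega>)^2)" for m unfolding Y2eq using bi by auto
  have Y2m: "m < M \<Longrightarrow> (\<integral>\<omega>. (Y m \<omega>)^2 \<partial>Q) = qq * (1 - qq)" for m
    unfolding Y2eq using bi Eb by (simp add: Q.prob_space power2_eq_square algebra_simps)
  have Yind: "m < M \<Longrightarrow> m' < M \<Longrightarrow> m \<noteq> m' \<Longrightarrow> Q.indep_var borel (Y m) borel (Y m')" for m m'
  proof -
    assume a: "m < M" "m' < M" "m \<noteq> m'"
    have mm: "(\<lambda>v::real. v - qq) \<in> borel_measurable borel" by measurable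
    from Q.indep_var_compose[OF badv_indep[OF k a] mm mm]
    show ?thesis by (simp add: o_def Y_def[abs_def])
  qed
  have vs: "integrable Q (\<lambda>\<omega>. (\<Sum>m\<in>{..<M}. Y m \<omega>)^2)"
     "(\<integral>\<omega>. (\<Sum>m\<in>{..<M}. Y m \<omega>)^2 \<partial>Q) = (\<Sum>m\<in>{..<M}. \<integral>\<omega>. (Y m \<omega>)^2 \<partial>Q)"
    using Yi Y2i Ym Yind by (intro var_sum[OF Q_prob]; auto)+
  have si: "integrable Q (\<lambda>\<omega>. \<Sum>m\<in>{..<M}. Y m \<omega>)"
    using Yi by (intro Bochner_Integration.integrable_sum) auto
  have sm: "(\<integral>\<omega>. (\<Sum>m\<in>{..<M}. Y m \<omega>) \<partial>Q) = 0"
    using Yi Ym by (simp add: Bochner_Integration.integral_sum)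
  have sv: "(\<integral>\<omega>. (\<Sum>m\<in>{..<M}. Y m \<omega>)^2 \<partial>Q) \<le> real M * qq * (1-qq)"
    using vs(2) Y2m by simp
  have c: "0 < real M * (1-2*qq)/2" using r M_pos by simp
  have "{\<omega>\<in>space Q. real M \<le> 2 * (\<Sum>m<M. badv k x m i \<omega>)} = {\<omega>\<in>space Q. real M * (1-2*qq)/2 \<le> (\<Sum>m\<in>{..<M}. Y m \<omega>)}"
  proof -
    have e: "(\<Sum>m\<in>{..<M}. Y m \<omega>) = (\<Sum>m<M. badv k x m i \<omega>) - real M * qq" for \<omega>
      by (simp add: Y_def sum_subtractf)
    have "real M \<le> 2 * (\<Sum>m<M. badv k x m i \<omega>) \<longleftrightarrow> real M * (1-2*qq)/2 \<le> (\<Sum>m\<in>{..<M}. Y m \<omega>)" for \<omega>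
    proof -
      have "real M * (1-2*qq)/2 = real M/2 - real M*qq" by (simp add: field_simps)
      thus ?thesis unfolding e by linarith
    qed
    thus ?thesis by auto
  qed
  also have "Q.prob \<dots> \<le> (real M * qq * (1-qq)) / (real M * qq * (1-qq) + (real M * (1-2*qq)/2)^2)"
    by (rule cantelli[OF Q_prob si vs(1) sm sv c])
  finally show ?thesis .
qed


lemma coord_b:
  assumes k: "k < K" and uni: "unimodal (minibatch_noise_law G P g K x i)"
    and sym: "symmetric0 (minibatch_noise_law G P g K x i)"
  shows "\<bar>g x $ i\<bar> - 2 * (sigma $ i / sqrt (real K)) / sqrt (real M)
           \<le> (\<integral>\<omega>. g x $ i * vote k x (\<lambda>t. W t \<omega>) $ i \<partial>Q)"
proof (cases "g x $ i = 0")
  case True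
  have "0 \<le> sigma $ i / sqrt (real K) / sqrt (real M)" using sigma_nonneg[of i] by simp
  thus ?thesis using True by simp
next
  case False
  let ?mu = "minibatch_noise_law G P g K x i"
  let ?gm = "g x $ i"
  let ?a = "\<bar>?gm\<bar>"
  have a0: "0 < ?a" using False by simp
  have m0: "0 < M" using M_pos by simp
  have Zm: "Zn k x 0 i \<in> borel_measurable Q" by (rule Zn_meas[OF k m0])
  have law: "?mu = distr Q borel (Zn k x 0 i)" using worker_law[OF k m0] by simp
  interpret mu: prob_space ?mu unfolding law by (rule Q.prob_space_distr[OF Zm])
  interpret symu ?mu
  proof unfold_locales
    show "sets ?mu = sets borel" unfolding law by simp
  qed (rule uni, rule sym)
  have sy: "symu ?mu" by (rule symu_axioms)
  note Zf = Zn_facts[OF k m0, of x i]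
  have sqm: "(\<lambda>z::real. z^2) \<in> borel_measurable borel" by measurable
  have int2: "integrable ?mu (\<lambda>z. z^2)"
    unfolding law using integrable_distr_eq[OF Zm sqm] Zf(3) by simp
  have T: "(\<integral>z. z^2 \<partial>?mu) \<le> (sigma $ i)^2 / real K"
    unfolding law using integral_distr[OF Zm sqm] Zf(4) by simp
  define qq where "qq = measure ?mu {..-?a}"
  define r where "r = 1 - 2 * qq"
  define t where "t = sigma $ i / sqrt (real K)"
  have t0: "0 \<le> t" using sigma_nonneg[of i] by (simp add: t_def)
  have t2: "t^2 = (sigma $ i)^2 / real K" using K_pos by (simp add: t_def power_divide)
  have gs: "?a^2 * (1 - r^2) \<le> 4 * t^2 * r^2"
    using gauss[OF a0 int2 T] by (simp add: r_def qq_def t2)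
  have r0: "0 \<le> r" using half[OF a0] by (simp add: r_def qq_def)
  have r1: "r \<le> 1" by (simp add: r_def qq_def)
  have rpos: "0 < r"
  proof (rule ccontr)
    assume "\<not> 0 < r" hence "r = 0" using r0 by simp
    hence "?a^2 \<le> 0" using gs by simp
    thus False using a0 by simp
  qed
  have qeq: "\<And>m. m < M \<Longrightarrow> Q.prob {\<omega>\<in>space Q. ?gm * mbv k x m \<omega> $ i \<le> 0} = qq"
    unfolding qq_def by (rule q_eq[OF k _ False sy])
  have mp: "Q.prob {\<omega>\<in>space Q. real M \<le> 2 * (\<Sum>m<M. badv k x m i \<omega>)}
          \<le> (real M * qq * (1-qq)) / (real M * qq * (1-qq) + (real M * (1-2*qq)/2)^2)"
  proof (rule maj_prob[OF k qeq])
    show "0 < 1 - 2 * qq" using rpos unfolding r_def .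
  qed
  have qr: "qq = (1 - r) / 2" by (simp add: r_def)
  have alg: "2 * ?a * ((real M * ((1 - r)/2) * (1 - (1 - r)/2)) / (real M * ((1 - r)/2) * (1 - (1 - r)/2) + (real M * r / 2)^2))
           \<le> 2 * t / sqrt (real M)"
    by (rule maj_alg[OF a0 rpos r1 t0 _ gs]) (use M_pos in simp)
  define E where "E = {\<omega>\<in>space Q. real M \<le> 2 * (\<Sum>m<M. badv k x m i \<omega>)}"
  have Em: "E \<in> sets Q"
  proof -
    have "(\<lambda>\<omega>. \<Sum>m<M. badv k x m i \<omega>) \<in> borel_measurable Q"
      using badv_meas[OF k] by (intro borel_measurable_sum) auto
    thus ?thesis unfolding E_def by measurable
  qed
  have PE: "2 * ?a * Q.prob E \<le> 2 * t / sqrt (real M)"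
  proof -
    have "2 * ?a * Q.prob E \<le> 2 * ?a * ((real M * qq * (1-qq)) / (real M * qq * (1-qq) + (real M * (1-2*qq)/2)^2))"
      using mp a0 unfolding E_def by (intro mult_left_mono) auto
    also have "\<dots> = 2 * ?a * ((real M * ((1 - r)/2) * (1 - (1 - r)/2)) / (real M * ((1 - r)/2) * (1 - (1 - r)/2) + (real M * r / 2)^2))"
    proof -
      have r2: "1 - 2*qq = r" by (simp add: r_def)
      show ?thesis by (simp only: r2) (simp only: qr)
    qed
    finally show ?thesis using alg by linarith
  qed
  have pw: "?a - 2 * ?a * indicator E \<omega> \<le> ?gm * vote k x (\<lambda>t. W t \<omega>) $ i" if "\<omega> \<in> space Q" for \<omega>
    using vote_pw[of x i k \<omega>] that by (simp add: E_def indicator_def split: if_splits)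
  have int_rhs: "integrable Q (\<lambda>\<omega>. ?gm * vote k x (\<lambda>t. W t \<omega>) $ i)"
  proof (rule intb[where B="?a"])
    show "(\<lambda>\<omega>. ?gm * vote k x (\<lambda>t. W t \<omega>) $ i) \<in> borel_measurable Q"
      using vote_i_meas[OF k, of x i] by simp
    fix \<omega>
    have "\<bar>?gm\<bar> * \<bar>vote k x (\<lambda>t. W t \<omega>) $ i\<bar> \<le> \<bar>?gm\<bar> * 1"
      by (intro mult_left_mono vote_abs) auto
    thus "\<bar>?gm * vote k x (\<lambda>t. W t \<omega>) $ i\<bar> \<le> ?a" by (simp add: abs_mult)
  qed
  have int_lhs: "integrable Q (\<lambda>\<omega>. ?a - 2 * ?a * indicator E \<omega>)"
    using Em by (intro Bochner_Integration.integrable_diff Q.integrable_const integrable_mult_right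
        integrable_real_indicator) (auto simp: Q.emeasure_eq_measure)
  have "?a - 2 * ?a * Q.prob E = (\<integral>\<omega>. ?a - 2 * ?a * indicator E \<omega> \<partial>Q)"
    using Em by (simp add: Q.prob_space Bochner_Integration.integral_diff
        integrable_real_indicator Q.emeasure_eq_measure)
  also have "\<dots> \<le> (\<integral>\<omega>. ?gm * vote k x (\<lambda>t. W t \<omega>) $ i \<partial>Q)"
    using int_lhs int_rhs pw by (intro integral_mono_AE) auto
  finally have "?a - 2 * ?a * Q.prob E \<le> (\<integral>\<omega>. ?gm * vote k x (\<lambda>t. W t \<omega>) $ i \<partial>Q)" .
  thus ?thesis using PE by (simp add: t_def)
qed

end

context sgd
begin

lemma f_meas: "f \<in> borel_measurable borel"
  by (rule borel_measurable_continuous_onI[OF f_cont])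

lemma g_meas: "g \<in> borel_measurable borel"
  by (rule borel_measurable_continuous_onI[OF g_cont])

lemma l1g_meas: "(\<lambda>y. l1 (g y)) \<in> borel_measurable borel"
proof -
  have "(\<lambda>y. g y $ i) \<in> borel_measurable borel" for i
    using measurable_compose[OF g_meas borel_measurable_nth] by simp
  thus ?thesis unfolding l1_def by (intro borel_measurable_sum borel_measurable_abs) auto
qed

lemma f_bnd: "\<exists>B. \<forall>y\<in>cball c r. \<bar>f y\<bar> \<le> B"
proof -
  have "compact (f ` cball c r)"
    by (intro compact_continuous_image continuous_on_subset[OF f_cont]) auto
  hence "bounded (f ` cball c r)" by (rule compact_imp_bounded)
  thus ?thesis by (auto simp: bounded_real)
qed

lemma l1_le_norm: "l1 (v :: real^'d) \<le> real CARD('d) * norm v"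
proof -
  have "l1 v \<le> (\<Sum>i\<in>(UNIV::'d set). norm v)" unfolding l1_def
    by (intro sum_mono component_le_norm_cart)
  thus ?thesis by simp
qed

lemma l1g_bnd: "\<exists>B. \<forall>y\<in>cball c r. \<bar>l1 (g y)\<bar> \<le> B"
proof -
  have "compact (g ` cball c r)"
    by (intro compact_continuous_image continuous_on_subset[OF g_cont]) auto
  hence "bounded (g ` cball c r)" by (rule compact_imp_bounded)
  then obtain B where B: "\<forall>y\<in>cball c r. norm (g y) \<le> B" by (auto simp: bounded_iff)
  have "\<bar>l1 (g y)\<bar> \<le> real CARD('d) * B" if "y \<in> cball c r" for y
  proof -
    have "\<bar>l1 (g y)\<bar> = l1 (g y)" using l1_nonneg[of "g y"] by (rule abs_of_nonneg)
    also have "\<dots> \<le> real CARD('d) * norm (g y)" by (rule l1_le_norm)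
    also have "\<dots> \<le> real CARD('d) * B" using B that by (intro mult_left_mono) auto
    finally show ?thesis .
  qed
  thus ?thesis by blast
qed

definition "Phi k x = (\<integral>\<omega>. f (x - dl *\<^sub>R vote k x (\<lambda>t. W t \<omega>)) \<partial>Q)"

lemma phi_bound:
  assumes k: "k < K" and cb: "\<And>i. \<bar>g x $ i\<bar> - 2 * bt i \<le> (\<integral>\<omega>. g x $ i * vote k x (\<lambda>t. W t \<omega>) $ i \<partial>Q)"
  shows "Phi k x \<le> f x - dl * (l1 (g x) - 2 * (\<Sum>i\<in>UNIV. bt i)) + dl^2 / 2 * l1 L"
proof -
  let ?V = "\<lambda>\<omega>. vote k x (\<lambda>t. W t \<omega>)"
  have Vm: "?V \<in> borel_measurable Q" by (rule vote_W_meas[OF k])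
  obtain B where B: "\<forall>y\<in>cball x (dl * real CARD('d)). \<bar>f y\<bar> \<le> B" using f_bnd by blast
  have fi: "integrable Q (\<lambda>\<omega>. f (x - dl *\<^sub>R ?V \<omega>))"
  proof (rule intb[where B=B])
    show "(\<lambda>\<omega>. f (x - dl *\<^sub>R ?V \<omega>)) \<in> borel_measurable Q"
      using measurable_compose[OF _ f_meas] Vm by measurable
    fix \<omega>
    have "dist x (x - dl *\<^sub>R ?V \<omega>) = dl * norm (?V \<omega>)" using dl_pos by (simp add: dist_norm)
    also have "\<dots> \<le> dl * real CARD('d)" using dl_pos norm_vote by (intro mult_left_mono) auto
    finally show "\<bar>f (x - dl *\<^sub>R ?V \<omega>)\<bar> \<le> B" using B by auto
  qed
  have ti: "integrable Q (\<lambda>\<omega>. g x $ i * ?V \<omega> $ i)" for i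
  proof (rule intb[where B="\<bar>g x $ i\<bar>"])
    show "(\<lambda>\<omega>. g x $ i * ?V \<omega> $ i) \<in> borel_measurable Q"
      using vote_i_meas[OF k, of x i] by simp
    fix \<omega>
    have "\<bar>g x $ i\<bar> * \<bar>?V \<omega> $ i\<bar> \<le> \<bar>g x $ i\<bar> * 1" by (intro mult_left_mono vote_abs) auto
    thus "\<bar>g x $ i * ?V \<omega> $ i\<bar> \<le> \<bar>g x $ i\<bar>" by (simp add: abs_mult)
  qed
  have pw: "f (x - dl *\<^sub>R ?V \<omega>) \<le> f x - dl * (\<Sum>i\<in>UNIV. g x $ i * ?V \<omega> $ i) + dl^2 / 2 * l1 L" for \<omega>
  proof -
    have "f (x - dl *\<^sub>R ?V \<omega>) \<le> f x - dl * (g x \<bullet> ?V \<omega>) + dl^2 / 2 * l1 L"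
      using dl_pos vote_abs by (intro descent) auto
    thus ?thesis by (simp add: inner_vec_def)
  qed
  have si: "integrable Q (\<lambda>\<omega>. \<Sum>i\<in>UNIV. g x $ i * ?V \<omega> $ i)"
    using ti by (intro Bochner_Integration.integrable_sum) auto
  have "Phi k x \<le> (\<integral>\<omega>. f x - dl * (\<Sum>i\<in>UNIV. g x $ i * ?V \<omega> $ i) + dl^2 / 2 * l1 L \<partial>Q)"
    unfolding Phi_def using fi si pw by (intro integral_mono) auto
  also have "\<dots> = f x - dl * (\<Sum>i\<in>UNIV. \<integral>\<omega>. g x $ i * ?V \<omega> $ i \<partial>Q) + dl^2 / 2 * l1 L"
    using si ti by (simp add: Q.prob_space Bochner_Integration.integral_sum)
  also have "\<dots> \<le> f x - dl * (\<Sum>i\<in>UNIV. \<bar>g x $ i\<bar> - 2 * bt i) + dl^2 / 2 * l1 L"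
  proof -
    have "(\<Sum>i\<in>UNIV. \<bar>g x $ i\<bar> - 2 * bt i) \<le> (\<Sum>i\<in>UNIV. \<integral>\<omega>. g x $ i * ?V \<omega> $ i \<partial>Q)"
      by (intro sum_mono cb)
    thus ?thesis using dl_pos by (simp add: mult_left_mono)
  qed
  also have "(\<Sum>i\<in>UNIV. \<bar>g x $ i\<bar> - 2 * bt i) = l1 (g x) - 2 * (\<Sum>i\<in>UNIV. bt i)"
    by (simp add: l1_def sum_subtractf sum_distrib_left)
  finally show ?thesis .
qed

end

context sgd
begin

definition "Xv k \<omega> = traj (\<lambda>t. W t \<omega>) k"

lemma Xv_meas: "k \<le> K \<Longrightarrow> Xv k \<in> borel_measurable Q"
  unfolding Xv_def[abs_def] by (rule traj_meas_Q)

lemma Xv_dist: "dist (Xv k \<omega>) x0 \<le> real k * (dl * real CARD('d))"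
  unfolding Xv_def by (rule traj_dist)

lemma bounded_integral_abs:
  assumes "integrable Q h" "\<And>\<omega>. \<bar>h \<omega>\<bar> \<le> B"
  shows "\<bar>\<integral>\<omega>. h \<omega> \<partial>Q\<bar> \<le> (B::real)"
proof -
  have "(\<integral>\<omega>. h \<omega> \<partial>Q) \<le> (\<integral>\<omega>. B \<partial>Q)" using assms by (intro integral_mono) (auto simp: abs_le_iff)
  moreover have "(\<integral>\<omega>. -B \<partial>Q) \<le> (\<integral>\<omega>. h \<omega> \<partial>Q)"
  proof (rule integral_mono)
    fix \<omega> show "- B \<le> h \<omega>" using assms(2)[of \<omega>] by linarith
  qed (use assms in auto)
  ultimately show ?thesis by (simp add: Q.prob_space abs_le_iff)
qed

lemma step_eq:
  assumes k: "k < K"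
  shows "integrable Q (\<lambda>\<omega>. Phi k (Xv k \<omega>))"
    and "(\<integral>\<omega>. f (Xv (Suc k) \<omega>) \<partial>Q) = (\<integral>\<omega>. Phi k (Xv k \<omega>) \<partial>Q)"
proof -
  define A where "A = (\<lambda>\<omega>. restrict (\<lambda>t. W t \<omega>) (Ilt k))"
  define B where "B = (\<lambda>\<omega>. restrict (\<lambda>t. W t \<omega>) (Blk k))"
  define N1 where "N1 = PiM (Ilt k) (\<lambda>_. P)"
  define N2 where "N2 = PiM (Blk k) (\<lambda>_. P)"
  have ind: "Q.indep_var N1 A N2 B" unfolding A_def B_def N1_def N2_def
    using k by (intro Q.indep_var_restrict[OF W_indep]) (auto simp: Ilt_def Blk_def)
  have Am: "A \<in> Q \<rightarrow>\<^sub>M N1" unfolding A_def N1_def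
    using k by (intro measurable_restrict W_meas) (auto simp: Ilt_def II_def)
  have Bm: "B \<in> Q \<rightarrow>\<^sub>M N2" unfolding B_def N2_def
    using k by (intro measurable_restrict W_meas) (auto simp: Blk_def II_def)
  define R where "R = real K * (dl * real CARD('d)) + dl * real CARD('d)"
  obtain Bf where Bf: "\<forall>y\<in>cball x0 R. \<bar>f y\<bar> \<le> Bf" using f_bnd by blast
  define F where "F = (\<lambda>a b. f (traj a k - dl *\<^sub>R vote k (traj a k) b))"
  have Fb: "\<bar>F a b\<bar> \<le> Bf" for a b
  proof -
    have "dist x0 (traj a k - dl *\<^sub>R vote k (traj a k) b) \<le> dist x0 (traj a k) + dist (traj a k) (traj a k - dl *\<^sub>R vote k (traj a k) b)"
      by (rule dist_triangle)
    also have "dist (traj a k) (traj a k - dl *\<^sub>R vote k (traj a k) b) = dl * norm (vote k (traj a k) b)"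
      using dl_pos by (simp add: dist_norm)
    also have "\<dots> \<le> dl * real CARD('d)" using dl_pos norm_vote by (intro mult_left_mono) auto
    also have "dist x0 (traj a k) \<le> real k * (dl * real CARD('d))" using traj_dist by (simp add: dist_commute)
    also have "real k * (dl * real CARD('d)) \<le> real K * (dl * real CARD('d))"
      using k dl_pos by (intro mult_right_mono) auto
    finally have "traj a k - dl *\<^sub>R vote k (traj a k) b \<in> cball x0 R" by (simp add: R_def)
    thus ?thesis using Bf by (simp add: F_def)
  qed
  have trm: "(\<lambda>a. traj a k) \<in> borel_measurable N1" unfolding N1_def by (rule traj_meas_PiM) simp
  have Fm: "(\<lambda>(a,b). F a b) \<in> borel_measurable (N1 \<Otimes>\<^sub>M N2)"
  proof -
    have t1: "(\<lambda>z. traj (fst z) k) \<in> borel_measurable (N1 \<Otimes>\<^sub>M N2)"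
      by (rule measurable_compose[OF measurable_fst trm])
    have v1: "(\<lambda>z. vote k (traj (fst z) k) (snd z)) \<in> borel_measurable (N1 \<Otimes>\<^sub>M N2)"
    proof (rule meas_vote[OF t1])
      fix m j assume "m < M" "j < K"
      hence "(k,m,j) \<in> Blk k" by (simp add: Blk_def)
      hence "(\<lambda>b. b (k,m,j)) \<in> N2 \<rightarrow>\<^sub>M P" unfolding N2_def by (rule measurable_component_singleton)
      thus "(\<lambda>z. snd z (k,m,j)) \<in> N1 \<Otimes>\<^sub>M N2 \<rightarrow>\<^sub>M P" by (rule measurable_compose[OF measurable_snd])
    qed
    have "(\<lambda>z. traj (fst z) k - dl *\<^sub>R vote k (traj (fst z) k) (snd z)) \<in> borel_measurable (N1 \<Otimes>\<^sub>M N2)"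
      using t1 v1 by measurable
    from measurable_compose[OF this f_meas]
    show ?thesis by (simp add: F_def case_prod_beta')
  qed
  have XA: "traj (A \<omega>) k = Xv k \<omega>" for \<omega>
    unfolding A_def Xv_def by (intro traj_cong) auto
  have VB: "vote k y (B \<omega>) = vote k y (\<lambda>t. W t \<omega>)" for y \<omega>
    unfolding B_def by (intro vote_cong) (auto simp: Blk_def)
  have e1: "F (A \<omega>) (B \<omega>) = f (Xv (Suc k) \<omega>)" for \<omega>
    by (simp add: F_def XA VB Xv_def traj_Suc)
  have e2: "(\<integral>\<omega>'. F (A \<omega>) (B \<omega>') \<partial>Q) = Phi k (Xv k \<omega>)" for \<omega>
    by (simp add: F_def XA VB Phi_def)
  from freeze[OF Q_prob ind Fm Fb]
  show "(\<integral>\<omega>. f (Xv (Suc k) \<omega>) \<partial>Q) = (\<integral>\<omega>. Phi k (Xv k \<omega>) \<partial>Q)"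
    by (simp add: e1 e2)
  show "integrable Q (\<lambda>\<omega>. Phi k (Xv k \<omega>))"
  proof -
    have "(\<lambda>(a,\<omega>'). F a (B \<omega>')) \<in> borel_measurable (N1 \<Otimes>\<^sub>M Q)"
    proof -
      have "(\<lambda>z. (fst z, B (snd z))) \<in> N1 \<Otimes>\<^sub>M Q \<rightarrow>\<^sub>M N1 \<Otimes>\<^sub>M N2"
        by (intro measurable_Pair measurable_fst measurable_compose[OF measurable_snd Bm])
      from measurable_compose[OF this Fm] show ?thesis by (simp add: case_prod_beta')
    qed
    hence "(\<lambda>a. \<integral>\<omega>'. F a (B \<omega>') \<partial>Q) \<in> borel_measurable N1"
      by (rule Q.borel_measurable_lebesgue_integral)
    from measurable_compose[OF Am this]
    have mm: "(\<lambda>\<omega>. Phi k (Xv k \<omega>)) \<in> borel_measurable Q" by (simp add: e2)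
    have "\<bar>Phi k (Xv k \<omega>)\<bar> \<le> Bf" for \<omega>
    proof -
      let ?y = "Xv k \<omega>"
      have Vm: "(\<lambda>\<omega>'. vote k ?y (\<lambda>t. W t \<omega>')) \<in> borel_measurable Q" by (rule vote_W_meas[OF k])
      have fm: "(\<lambda>\<omega>'. f (?y - dl *\<^sub>R vote k ?y (\<lambda>t. W t \<omega>'))) \<in> borel_measurable Q"
        using measurable_compose[OF _ f_meas] Vm by measurable
      have fb: "\<bar>f (?y - dl *\<^sub>R vote k ?y (\<lambda>t. W t \<omega>'))\<bar> \<le> Bf" for \<omega>'
        using Fb[of "A \<omega>" "B \<omega>'"] by (simp add: F_def XA VB)
      have "integrable Q (\<lambda>\<omega>'. f (?y - dl *\<^sub>R vote k ?y (\<lambda>t. W t \<omega>')))"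
        using fm fb by (intro intb[where B=Bf])
      from bounded_integral_abs[OF this fb] show ?thesis by (simp add: Phi_def)
    qed
    thus ?thesis using mm by (intro intb[where B=Bf])
  qed
qed

end

lemma final_alg:
  fixes Lq D s E :: real and K :: nat
  assumes Lq: "0 < Lq" and K: "1 \<le> K" and D: "0 \<le> D" and s: "0 \<le> s" and E0: "0 \<le> E"
    and dl: "dl = 1 / sqrt (Lq * real K)"
    and EB: "E \<le> D / (real K * dl) + 2 * (s / sqrt (real K)) + dl * Lq / 2"
  shows "E^2 \<le> 1 / sqrt (real (K^2)) * (sqrt Lq * (D + 1/2) + 2 * s)^2"
proof -
  have sK: "0 < sqrt (real K)" using K by simp
  have sL: "0 < sqrt Lq" using Lq by simp
  have KK: "sqrt (real K) * sqrt (real K) = real K" using K by simp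
  have LL: "sqrt Lq * sqrt Lq = Lq" using Lq by simp
  have dle: "dl = 1 / (sqrt Lq * sqrt (real K))" by (simp add: dl real_sqrt_mult)
  have t1: "D / (real K * dl) = D * sqrt Lq / sqrt (real K)"
    using sK sL KK by (simp add: dle field_simps)
  have t3: "dl * Lq / 2 = sqrt Lq / (2 * sqrt (real K))"
    using Lq sK sL by (simp add: dle field_simps)
  define U where "U = sqrt Lq * (D + 1/2) + 2 * s"
  have U0: "0 \<le> U" using sL D s by (simp add: U_def)
  have "E \<le> U / sqrt (real K)"
    using EB unfolding t1 t3 U_def using sK by (simp add: field_simps)
  hence "E^2 \<le> (U / sqrt (real K))^2" using E0 by (intro power_mono) auto
  also have "\<dots> = U^2 / real K" using K by (simp add: power_divide)
  also have "\<dots> = 1 / sqrt (real (K^2)) * U^2" by simp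
  finally show ?thesis by (simp add: U_def)
qed

context sgd
begin

lemma fX_int: "k \<le> K \<Longrightarrow> integrable Q (\<lambda>\<omega>. f (Xv k \<omega>))"
proof -
  assume k: "k \<le> K"
  obtain B where B: "\<forall>y\<in>cball x0 (real K * (dl * real CARD('d))). \<bar>f y\<bar> \<le> B" using f_bnd by blast
  show ?thesis
  proof (rule intb[where B=B])
    show "(\<lambda>\<omega>. f (Xv k \<omega>)) \<in> borel_measurable Q" using measurable_compose[OF Xv_meas[OF k] f_meas] .
    fix \<omega>
    have "dist x0 (Xv k \<omega>) \<le> real K * (dl * real CARD('d))"
      using Xv_dist[of k \<omega>] k dl_pos by (simp add: dist_commute) (smt (verit) mult_right_mono of_nat_0_le_iff of_nat_mono zero_le_mult_iff)
    thus "\<bar>f (Xv k \<omega>)\<bar> \<le> B" using B by auto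
  qed
qed

lemma gX_int: "k \<le> K \<Longrightarrow> integrable Q (\<lambda>\<omega>. l1 (g (Xv k \<omega>)))"
proof -
  assume k: "k \<le> K"
  obtain B where B: "\<forall>y\<in>cball x0 (real K * (dl * real CARD('d))). \<bar>l1 (g y)\<bar> \<le> B" using l1g_bnd by blast
  show ?thesis
  proof (rule intb[where B=B])
    show "(\<lambda>\<omega>. l1 (g (Xv k \<omega>))) \<in> borel_measurable Q" using measurable_compose[OF Xv_meas[OF k] l1g_meas] .
    fix \<omega>
    have "dist x0 (Xv k \<omega>) \<le> real K * (dl * real CARD('d))"
      using Xv_dist[of k \<omega>] k dl_pos by (simp add: dist_commute) (smt (verit) mult_right_mono of_nat_0_le_iff of_nat_mono zero_le_mult_iff)
    thus "\<bar>l1 (g (Xv k \<omega>))\<bar> \<le> B" using B by auto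
  qed
qed

lemma chain:
  assumes bnd: "\<And>k. k < K \<Longrightarrow> AE \<omega> in Q. Phi k (Xv k \<omega>) \<le> f (Xv k \<omega>) - dl * l1 (g (Xv k \<omega>)) + C"
  shows "dl * (\<Sum>k<K. \<integral>\<omega>. l1 (g (Xv k \<omega>)) \<partial>Q) \<le> f x0 - fstar + real K * C"
proof -
  have step: "(\<integral>\<omega>. f (Xv (Suc k) \<omega>) \<partial>Q) \<le> (\<integral>\<omega>. f (Xv k \<omega>) \<partial>Q) - dl * (\<integral>\<omega>. l1 (g (Xv k \<omega>)) \<partial>Q) + C"
    if k: "k < K" for k
  proof -
    have "(\<integral>\<omega>. f (Xv (Suc k) \<omega>) \<partial>Q) = (\<integral>\<omega>. Phi k (Xv k \<omega>) \<partial>Q)" by (rule step_eq(2)[OF k])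
    also have "\<dots> \<le> (\<integral>\<omega>. f (Xv k \<omega>) - dl * l1 (g (Xv k \<omega>)) + C \<partial>Q)"
      using step_eq(1)[OF k] fX_int[of k] gX_int[of k] k bnd[OF k] by (intro integral_mono_AE) auto
    also have "\<dots> = (\<integral>\<omega>. f (Xv k \<omega>) \<partial>Q) - dl * (\<integral>\<omega>. l1 (g (Xv k \<omega>)) \<partial>Q) + C"
      using fX_int[of k] gX_int[of k] k by (simp add: Q.prob_space)
    finally show ?thesis .
  qed
  have ind: "n \<le> K \<Longrightarrow> dl * (\<Sum>k<n. \<integral>\<omega>. l1 (g (Xv k \<omega>)) \<partial>Q) \<le> f x0 - (\<integral>\<omega>. f (Xv n \<omega>) \<partial>Q) + real n * C" for n
  proof (induction n)
    case 0 thus ?case by (simp add: Xv_def traj_0 Q.prob_space)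
  next
    case (Suc n)
    hence n: "n < K" by simp
    have "dl * (\<Sum>k<Suc n. \<integral>\<omega>. l1 (g (Xv k \<omega>)) \<partial>Q)
          = dl * (\<Sum>k<n. \<integral>\<omega>. l1 (g (Xv k \<omega>)) \<partial>Q) + dl * (\<integral>\<omega>. l1 (g (Xv n \<omega>)) \<partial>Q)"
      by (simp add: algebra_simps)
    also have "\<dots> \<le> f x0 - (\<integral>\<omega>. f (Xv n \<omega>) \<partial>Q) + real n * C + dl * (\<integral>\<omega>. l1 (g (Xv n \<omega>)) \<partial>Q)"
      using Suc.IH n by simp
    also have "\<dots> \<le> f x0 - (\<integral>\<omega>. f (Xv (Suc n) \<omega>) \<partial>Q) + real (Suc n) * C"
      using step[OF n] by (simp add: algebra_simps)
    finally show ?case .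
  qed
  have "fstar \<le> (\<integral>\<omega>. f (Xv K \<omega>) \<partial>Q)"
  proof -
    have "(\<integral>\<omega>. fstar \<partial>Q) \<le> (\<integral>\<omega>. f (Xv K \<omega>) \<partial>Q)"
      using fX_int[of K] A1 by (intro integral_mono) auto
    thus ?thesis by (simp add: Q.prob_space)
  qed
  thus ?thesis using ind[of K] by simp
qed

end

context sgd
begin

lemma sum_sig: "(\<Sum>i\<in>UNIV. sigma $ i / c) = l1 sigma / c"
  by (simp add: l1_def abs_of_nonneg[OF sigma_nonneg] sum_divide_distrib)

lemma avg_bound:
  assumes bt: "\<And>k x i. k < K \<Longrightarrow> Pr k x \<Longrightarrow> \<bar>g x $ i\<bar> - 2 * (sigma $ i / c) \<le> (\<integral>\<omega>. g x $ i * vote k x (\<lambda>t. W t \<omega>) $ i \<partial>Q)"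
    and pr: "\<And>k. k < K \<Longrightarrow> AE \<omega> in Q. Pr k (Xv k \<omega>)"
  shows "(\<integral>\<omega>. (1 / real K) * (\<Sum>k<K. l1 (g (Xv k \<omega>))) \<partial>Q)
          \<le> (f x0 - fstar) / (real K * dl) + 2 * (l1 sigma / c) + dl * l1 L / 2"
proof -
  define C where "C = 2 * dl * (l1 sigma / c) + dl^2 / 2 * l1 L"
  have bnd: "AE \<omega> in Q. Phi k (Xv k \<omega>) \<le> f (Xv k \<omega>) - dl * l1 (g (Xv k \<omega>)) + C" if k: "k < K" for k
    using pr[OF k]
  proof (rule AE_mp, intro AE_I2 impI)
    fix \<omega> assume "Pr k (Xv k \<omega>)"
    from phi_bound[OF k bt[OF k this]]
    have "Phi k (Xv k \<omega>) \<le> f (Xv k \<omega>) - dl * (l1 (g (Xv k \<omega>)) - 2 * (\<Sum>i\<in>UNIV. sigma $ i / c)) + dl^2 / 2 * l1 L" .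
    thus "Phi k (Xv k \<omega>) \<le> f (Xv k \<omega>) - dl * l1 (g (Xv k \<omega>)) + C"
      by (simp add: sum_sig C_def algebra_simps)
  qed
  have ch: "dl * (\<Sum>k<K. \<integral>\<omega>. l1 (g (Xv k \<omega>)) \<partial>Q) \<le> f x0 - fstar + real K * C"
    by (rule chain[OF bnd])
  have eq: "(\<integral>\<omega>. (1 / real K) * (\<Sum>k<K. l1 (g (Xv k \<omega>))) \<partial>Q) = (1 / real K) * (\<Sum>k<K. \<integral>\<omega>. l1 (g (Xv k \<omega>)) \<partial>Q)"
  proof -
    have "(\<integral>\<omega>. (1 / real K) * (\<Sum>k<K. l1 (g (Xv k \<omega>))) \<partial>Q) = (1 / real K) * (\<integral>\<omega>. (\<Sum>k<K. l1 (g (Xv k \<omega>))) \<partial>Q)"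
      by (rule integral_mult_right_zero)
    also have "(\<integral>\<omega>. (\<Sum>k<K. l1 (g (Xv k \<omega>))) \<partial>Q) = (\<Sum>k<K. \<integral>\<omega>. l1 (g (Xv k \<omega>)) \<partial>Q)"
      by (rule Bochner_Integration.integral_sum) (use gX_int in auto)
    finally show ?thesis .
  qed
  have Kp: "0 < real K" using K_pos by simp
  have "(1 / real K) * (\<Sum>k<K. \<integral>\<omega>. l1 (g (Xv k \<omega>)) \<partial>Q) \<le> (f x0 - fstar + real K * C) / (real K * dl)"
    using ch dl_pos Kp by (simp add: field_simps)
  also have "\<dots> = (f x0 - fstar) / (real K * dl) + 2 * (l1 sigma / c) + dl * l1 L / 2"
    using dl_pos Kp by (simp add: C_def field_simps power2_eq_square)
  finally show ?thesis using eq by linarith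
qed

theorem main_loc:
  shows "integrable Q (\<lambda>\<omega>. (1 / real K) * (\<Sum>k<K. l1 (g (Xv k \<omega>))))
    \<and> (\<integral>\<omega>. (1 / real K) * (\<Sum>k<K. l1 (g (Xv k \<omega>))) \<partial>Q)^2
        \<le> 1 / sqrt (real (K^2)) * (sqrt (l1 L) * (f x0 - fstar + 1/2) + 2 * l1 sigma)^2
    \<and> ((\<forall>k<K. AE \<omega> in Q. \<forall>i. unimodal (minibatch_noise_law G P g K (Xv k \<omega>) i)
                              \<and> symmetric0 (minibatch_noise_law G P g K (Xv k \<omega>) i))
       \<longrightarrow> (\<integral>\<omega>. (1 / real K) * (\<Sum>k<K. l1 (g (Xv k \<omega>))) \<partial>Q)^2
        \<le> 1 / sqrt (real (K^2)) * (sqrt (l1 L) * (f x0 - fstar + 1/2) + 2 / sqrt (real M) * l1 sigma)^2)"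
proof (intro conjI impI)
  show "integrable Q (\<lambda>\<omega>. (1 / real K) * (\<Sum>k<K. l1 (g (Xv k \<omega>))))"
    using gX_int by (intro integrable_mult_right Bochner_Integration.integrable_sum) auto
  define E where "E = (\<integral>\<omega>. (1 / real K) * (\<Sum>k<K. l1 (g (Xv k \<omega>))) \<partial>Q)"
  have E0: "0 \<le> E" unfolding E_def
    by (intro integral_nonneg_AE AE_I2 mult_nonneg_nonneg sum_nonneg l1_nonneg) auto
  have D0: "0 \<le> f x0 - fstar" using A1[of x0] by simp
  have dle: "dl = 1 / sqrt (l1 L * real K)" by (simp add: dl_def)
  have s0: "0 \<le> l1 sigma" by (rule l1_nonneg)
  have EA: "E \<le> (f x0 - fstar) / (real K * dl) + 2 * (l1 sigma / sqrt (real K)) + dl * l1 L / 2"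
    unfolding E_def
  proof (rule avg_bound[where Pr="\<lambda>k x. True"])
    fix k x i assume k: "k < K"
    show "\<bar>g x $ i\<bar> - 2 * (sigma $ i / sqrt (real K)) \<le> (\<integral>\<omega>. g x $ i * vote k x (\<lambda>t. W t \<omega>) $ i \<partial>Q)"
      by (rule coord_a[OF k])
  qed auto
  show "E^2 \<le> 1 / sqrt (real (K^2)) * (sqrt (l1 L) * (f x0 - fstar + 1/2) + 2 * l1 sigma)^2"
    by (rule final_alg[OF L_pos K_pos D0 s0 E0 dle EA])
  assume H: "\<forall>k<K. AE \<omega> in Q. \<forall>i. unimodal (minibatch_noise_law G P g K (Xv k \<omega>) i)
                              \<and> symmetric0 (minibatch_noise_law G P g K (Xv k \<omega>) i)"
  have EB: "E \<le> (f x0 - fstar) / (real K * dl) + 2 * ((l1 sigma / sqrt (real M)) / sqrt (real K)) + dl * l1 L / 2"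
  proof -
    have "E \<le> (f x0 - fstar) / (real K * dl) + 2 * (l1 sigma / (sqrt (real K) * sqrt (real M))) + dl * l1 L / 2"
      unfolding E_def
    proof (rule avg_bound[where Pr="\<lambda>k x. \<forall>i. unimodal (minibatch_noise_law G P g K x i)
                              \<and> symmetric0 (minibatch_noise_law G P g K x i)"])
      fix k x i assume k: "k < K" and pr: "\<forall>i. unimodal (minibatch_noise_law G P g K x i)
                              \<and> symmetric0 (minibatch_noise_law G P g K x i)"
      from coord_b[OF k, of x i] pr
      show "\<bar>g x $ i\<bar> - 2 * (sigma $ i / (sqrt (real K) * sqrt (real M))) \<le> (\<integral>\<omega>. g x $ i * vote k x (\<lambda>t. W t \<omega>) $ i \<partial>Q)"
        by (simp add: divide_divide_eq_left)
    qed (use H in auto)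
    thus ?thesis by (simp add: divide_divide_eq_left mult.commute)
  qed
  have s1: "0 \<le> l1 sigma / sqrt (real M)" using s0 by simp
  have "E^2 \<le> 1 / sqrt (real (K^2)) * (sqrt (l1 L) * (f x0 - fstar + 1/2) + 2 * (l1 sigma / sqrt (real M)))^2"
    by (rule final_alg[OF L_pos K_pos D0 s1 E0 dle EB])
  thus "E^2 \<le> 1 / sqrt (real (K^2)) * (sqrt (l1 L) * (f x0 - fstar + 1/2) + 2 / sqrt (real M) * l1 sigma)^2"
    by simp
qed

end

theorem theorem2:
  fixes f :: "real^'d \<Rightarrow> real"
    and g :: "real^'d \<Rightarrow> real^'d"
    and fstar :: real
    and L sigma :: "real^'d"
    and P :: "'w measure"
    and G :: "real^'d \<Rightarrow> 'w \<Rightarrow> real^'d"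
    and Q :: "'a measure"
    and W :: "nat \<times> nat \<times> nat \<Rightarrow> 'a \<Rightarrow> 'w"
    and K M :: nat
    and x0 :: "real^'d"
  assumes grad: "\<And>x. (f has_derivative (\<lambda>h. g x \<bullet> h)) (at x)"
    and A1: "\<And>x. f x \<ge> fstar"
    and L_nonneg: "\<And>i. L $ i \<ge> 0"
    and A2: "\<And>x y. \<bar>f y - f x - g x \<bullet> (y - x)\<bar> \<le> (1/2) * (\<Sum>i\<in>UNIV. L $ i * (y $ i - x $ i)^2)"
    and P_prob: "prob_space P"
    and G_meas: "(\<lambda>(x, w). G x w) \<in> borel_measurable (borel \<Otimes>\<^sub>M P)"
    and sigma_nonneg: "\<And>i. sigma $ i \<ge> 0"
    and A3_int: "\<And>x i. integrable P (\<lambda>w. G x w $ i)"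
    and A3_mean: "\<And>x i. (\<integral>w. G x w $ i \<partial>P) = g x $ i"
    and A3_var: "\<And>x i. (\<integral>\<^sup>+ w. ennreal ((G x w $ i - g x $ i)^2) \<partial>P) \<le> ennreal ((sigma $ i)^2)"
    and L_pos: "l1 L > 0"
    and K_pos: "K \<ge> 1"
    and M_pos: "M \<ge> 1"
    and Q_prob: "prob_space Q"
    and W_indep: "prob_space.indep_vars Q (\<lambda>_. P) W ({..<K} \<times> {..<M} \<times> {..<K})"
    and W_law: "\<And>t. t \<in> {..<K} \<times> {..<M} \<times> {..<K} \<Longrightarrow> distr Q P (W t) = P"
  defines "X \<equiv> (\<lambda>k \<omega>. signsgd_mv G M (\<lambda>_. 1 / sqrt (l1 L * real K)) (\<lambda>_. K) x0 (\<lambda>t. W t \<omega>) k)"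
    and "N \<equiv> K^2"
  shows "integrable Q (\<lambda>\<omega>. (1 / real K) * (\<Sum>k<K. l1 (g (X k \<omega>))))
    \<and> (\<integral>\<omega>. (1 / real K) * (\<Sum>k<K. l1 (g (X k \<omega>))) \<partial>Q)^2
        \<le> 1 / sqrt (real N) * (sqrt (l1 L) * (f x0 - fstar + 1/2) + 2 * l1 sigma)^2
    \<and> ((\<forall>k<K. AE \<omega> in Q. \<forall>i. unimodal (minibatch_noise_law G P g K (X k \<omega>) i)
                              \<and> symmetric0 (minibatch_noise_law G P g K (X k \<omega>) i))
       \<longrightarrow> (\<integral>\<omega>. (1 / real K) * (\<Sum>k<K. l1 (g (X k \<omega>))) \<partial>Q)^2
        \<le> 1 / sqrt (real N) * (sqrt (l1 L) * (f x0 - fstar + 1/2) + 2 / sqrt (real M) * l1 sigma)^2)"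
proof -
  have loc: "sgd f g L fstar sigma P G Q W K M"
    by (intro sgd.intro smooth.intro sgd_axioms.intro)
       (fact grad A1 L_nonneg A2 P_prob G_meas sigma_nonneg A3_int A3_mean A3_var L_pos K_pos M_pos Q_prob W_indep W_law)+
  interpret S: sgd f g L fstar sigma P G Q W K M x0 by (rule loc)
  have XX: "X = S.Xv"
    unfolding X_def by (simp add: fun_eq_iff S.Xv_def S.traj_def S.dl_def)
  show ?thesis using S.main_loc unfolding XX N_def .
qed

end
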